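(* Let $p_0$ be a probability distribution on $\mathbb{R}^d$, fix $t>0$, and let $\theta\mapsto M_t(\theta)$, $\theta\in\mathbb{R}^c$, be a differentiable map into symmetric positive definite $d\times d$ matrices. Let $p_t(\cdot;\theta)=p_0*\mathcal N(0,M_t(\theta))$ (the density of $x_0+M_t(\theta)^{1/2}\epsilon$, $x_0\sim p_0$, $\epsilon\sim\mathcal N(0,I)$ independent), and let $e_1,\dots,e_d$ be the standard basis of $\mathbb{R}^d$. Then for every coordinate $j\in\{1,\dots,c\}$ and all $x\in\mathbb{R}^d$, \[ \partial_{\theta_j}\nabla \log p_t(x;\theta)=\frac12\sum_{i=1}^d\partial_r\partial_s\,\nabla\log p_t\big(x+re_i+s\,\partial_{\theta_j}M_t(\theta)\,e_i;\theta\big)\Big|_{r=s=0}+\partial_s\,\nabla\log p_t\big(x+s\,\partial_{\theta_j}M_t(\theta)\,\nabla\log p_t(x;\theta);\theta\big)\Big|_{s=0}. \] Moreover, let $s(x,t,\phi)$ be a parametric vector field and, for each $\theta$, let $\phi^*(\theta)$ be a minimizer over $\phi$ of the loss \[ L(\theta,\phi)=\mathbb{E}_{t\sim\mathrm{Unif}[0,T],x_0\sim p_0,\epsilon\sim\mathcal N(0,I)}\Big[\big\|(I+M_t(\theta))^{-1/2}(\partial_tM_t(\theta))M_t(\theta)^{1/2}\big(M_t(\theta)^{1/2}s(x_0+M_t(\theta)^{1/2}\epsilon,t,\phi)+\epsilon\big)\big\|_2^2\Big], \] where $t\mapsto M_t(\theta)$ satisfies $M_0(\theta)=0$, $\partial_tM_t(\theta)\succ0$.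 Under sufficient model capacity and data (so that $s(\cdot,t,\phi^*(\theta))=\nabla\log p_t(\cdot;\theta)$), for all $x\in\mathbb{R}^d$, \[ \partial_{\theta_j}s(x,t,\phi^*(\theta))=\frac12\sum_{i=1}^d\partial_r\partial_s\, s\big(x+re_i+s\,\partial_{\theta_j}M_t(\theta)e_i,\,t,\,\phi^*(\theta)\big)\Big|_{r=s=0}+\partial_s\, s\big(x+s\,\partial_{\theta_j}M_t(\theta)\,s(x,t,\phi^*(\theta)),\,t,\,\phi^*(\theta)\big)\Big|_{s=0}. \]
   Context: In the displayed formulas, $r$ and $s$ (when used as scalar arguments) are real variables and $\partial_r,\partial_s$ denote derivatives with respect to them at $0$; the dependence on $\theta$ inside $\nabla\log p_t(\cdot;\theta)$ and $s(\cdot,t,\phi^*(\theta))$ on the right-hand sides is held fixed when differentiating in $r,s$. $\nabla$ denotes the gradient with respect to $x$. *)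

theory Defs
  imports "HOL-Analysis.Analysis" "HOL-Probability.Probability"
begin

definition sym_pd :: "real^'n^'n \<Rightarrow> bool" where
  "sym_pd A \<longleftrightarrow> transpose A = A \<and> (\<forall>v. v \<noteq> 0 \<longrightarrow> v \<bullet> (A *v v) > 0)"

definition sym_psd :: "real^'n^'n \<Rightarrow> bool" where
  "sym_psd A \<longleftrightarrow> transpose A = A \<and> (\<forall>v. v \<bullet> (A *v v) \<ge> 0)"

definition msqrt :: "real^'n^'n \<Rightarrow> real^'n^'n" where
  "msqrt A = (THE B. sym_psd B \<and> B ** B = A)"

definition gauss_density :: "real^'n^'n \<Rightarrow> real^'n \<Rightarrow> real" where
  "gauss_density S z =
     exp (- (z \<bullet> (matrix_inv S *v z)) / 2) / sqrt ((2 * pi) ^ CARD('n) * det S)"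

definition smoothed_density :: "(real^'n) measure \<Rightarrow> real^'n^'n \<Rightarrow> real^'n \<Rightarrow> real" where
  "smoothed_density p0 S x = (\<integral>y. gauss_density S (x - y) \<partial>p0)"

definition grad :: "(real^'n \<Rightarrow> real) \<Rightarrow> real^'n \<Rightarrow> real^'n" where
  "grad f x = (\<chi> k. deriv (\<lambda>h. f (x + h *\<^sub>R axis k 1)) 0)"

definition score :: "(real^'n \<Rightarrow> real) \<Rightarrow> real^'n \<Rightarrow> real^'n" where
  "score p = grad (\<lambda>x. ln (p x))"

definition pderiv_param :: "(real^'c \<Rightarrow> 'b::real_normed_vector) \<Rightarrow> real^'c \<Rightarrow> 'c \<Rightarrow> 'b" where
  "pderiv_param F \<theta> j = vector_derivative (\<lambda>h. F (\<theta> + h *\<^sub>R axis j 1)) (at 0)"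

definition dderiv2 :: "(real \<Rightarrow> real \<Rightarrow> 'b::real_normed_vector) \<Rightarrow> 'b" where
  "dderiv2 g = vector_derivative (\<lambda>r. vector_derivative (\<lambda>s. g r s) (at 0)) (at 0)"

definition std_normal_vec :: "(real^'n) measure" where
  "std_normal_vec = density lborel (\<lambda>e. ennreal (\<Prod>k\<in>UNIV. std_normal_density (e $ k)))"

definition time_deriv :: "(real \<Rightarrow> real^'c \<Rightarrow> real^'n^'n) \<Rightarrow> real \<Rightarrow> real \<Rightarrow> real^'c \<Rightarrow> real^'n^'n" where
  "time_deriv M T \<tau> \<theta> = vector_derivative (\<lambda>u. M u \<theta>) (at \<tau> within {0..T})"

definition score_loss ::
  "(real^'n) measure \<Rightarrow> (real \<Rightarrow> real^'c \<Rightarrow> real^'n^'n) \<Rightarrow> real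
   \<Rightarrow> (real^'n \<Rightarrow> real \<Rightarrow> 'p \<Rightarrow> real^'n) \<Rightarrow> real^'c \<Rightarrow> 'p \<Rightarrow> ennreal" where
  "score_loss p0 M T s \<theta> \<phi> =
     (\<integral>\<^sup>+ \<tau>. indicator {0..T} \<tau> / ennreal T *
        (\<integral>\<^sup>+ x0. (\<integral>\<^sup>+ \<epsilon>.
           ennreal ((norm (matrix_inv (msqrt (mat 1 + M \<tau> \<theta>)) ** time_deriv M T \<tau> \<theta>
                     ** msqrt (M \<tau> \<theta>)
                     *v (msqrt (M \<tau> \<theta>) *v s (x0 + msqrt (M \<tau> \<theta>) *v \<epsilon>) \<tau> \<phi> + \<epsilon>)))\<^sup>2)
         \<partial>std_normal_vec) \<partial>p0) \<partial>lborel)"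

end

theory Submission
  imports Defs
begin

lemma deriv_integral_dct:
  fixes \<mu> :: "'a measure" and f :: "real \<Rightarrow> 'a \<Rightarrow> real"
  assumes fm: "finite_measure \<mu>"
    and meas: "\<And>h. f h \<in> borel_measurable \<mu>"
    and bnd: "\<And>h y. \<bar>h\<bar> < \<delta> \<Longrightarrow> \<bar>f h y\<bar> \<le> C"
    and der: "\<And>y. y \<in> space \<mu> \<Longrightarrow> ((\<lambda>h. f h y) has_real_derivative f' y) (at 0)"
    and meas': "f' \<in> borel_measurable \<mu>"
    and dpos: "\<delta> > 0"
    and lip: "\<And>h y. \<bar>h\<bar> < \<delta> \<Longrightarrow> y \<in> space \<mu> \<Longrightarrow> \<bar>f h y - f 0 y\<bar> \<le> B * \<bar>h\<bar>"
  shows "((\<lambda>h. \<integral>y. f h y \<partial>\<mu>) has_real_derivative (\<integral>y. f' y \<partial>\<mu>)) (at 0)"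
proof -
  interpret finite_measure \<mu> by (rule fm)
  have int: "integrable \<mu> (f h)" if "\<bar>h\<bar> < \<delta>" for h
    using meas bnd[OF that] by (intro integrable_const_bound[where B=C]) auto
  show ?thesis
    unfolding has_field_derivative_iff
  proof (subst tendsto_at_iff_sequentially, intro allI impI)
    fix X :: "nat \<Rightarrow> real"
    assume X: "\<forall>i. X i \<in> UNIV - {0}" "X \<longlonglongrightarrow> 0"
    obtain N where N: "\<And>n. n \<ge> N \<Longrightarrow> \<bar>X n\<bar> < \<delta>"
      using X(2) dpos unfolding LIMSEQ_def dist_real_def by auto
    define s where "s n y = (f (X (n + N)) y - f 0 y) / X (n + N)" for n y
    have eq: "((\<lambda>h. ((\<integral>y. f h y \<partial>\<mu>) - (\<integral>y. f 0 y \<partial>\<mu>)) / (h - 0)) \<circ> X) (n + N)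
        = (\<integral>y. s n y \<partial>\<mu>)" for n
      unfolding s_def o_def using int[OF N[of "n + N"]] int[of 0] dpos by simp
    have "(\<lambda>n. \<integral>y. s n y \<partial>\<mu>) \<longlonglongrightarrow> (\<integral>y. f' y \<partial>\<mu>)"
    proof (rule integral_dominated_convergence[where w="\<lambda>_. B"])
      show "f' \<in> borel_measurable \<mu>" by (rule meas')
      show "s n \<in> borel_measurable \<mu>" for n unfolding s_def using meas by measurable
      show "integrable \<mu> (\<lambda>_. B)" by simp
      show "AE y in \<mu>. (\<lambda>n. s n y) \<longlonglongrightarrow> f' y"
      proof (rule AE_I2)
        fix y assume y: "y \<in> space \<mu>"
        have "((\<lambda>h. (f h y - f 0 y) / (h - 0)) \<longlongrightarrow> f' y) (at 0)"
          using der[OF y] unfolding has_field_derivative_iff .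
        then have "((\<lambda>h. (f h y - f 0 y) / (h - 0)) \<circ> X) \<longlonglongrightarrow> f' y"
          using X by (subst (asm) tendsto_at_iff_sequentially) blast
        then have "(\<lambda>n. ((\<lambda>h. (f h y - f 0 y) / (h - 0)) \<circ> X) (n + N)) \<longlonglongrightarrow> f' y"
          by (rule LIMSEQ_ignore_initial_segment)
        then show "(\<lambda>n. s n y) \<longlonglongrightarrow> f' y" unfolding s_def o_def by simp
      qed
      show "AE y in \<mu>. norm (s n y) \<le> B" for n
      proof (rule AE_I2)
        fix y assume y: "y \<in> space \<mu>"
        have x0: "X (n + N) \<noteq> 0" using X by auto
        have "\<bar>f (X (n + N)) y - f 0 y\<bar> \<le> B * \<bar>X (n + N)\<bar>" using lip[OF N y] by auto
        then show "norm (s n y) \<le> B" unfolding s_def using x0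
          by (simp add: abs_divide divide_le_eq)
      qed
    qed
    then have "(\<lambda>n. ((\<lambda>h. ((\<integral>y. f h y \<partial>\<mu>) - (\<integral>y. f 0 y \<partial>\<mu>)) / (h - 0)) \<circ> X) (n + N)) \<longlonglongrightarrow> (\<integral>y. f' y \<partial>\<mu>)"
      unfolding eq .
    then show "((\<lambda>h. ((\<integral>y. f h y \<partial>\<mu>) - (\<integral>y. f 0 y \<partial>\<mu>)) / (h - 0)) \<circ> X) \<longlonglongrightarrow> (\<integral>y. f' y \<partial>\<mu>)"
      by (rule LIMSEQ_offset)
  qed
qed

definition mK :: "real^'n^'m \<Rightarrow> real" where "mK A = real CARD('m) * real CARD('n)"

lemma mv_norm_bound:
  fixes A :: "real^'n^'m"
  shows "norm (A *v x) \<le> real CARD('m) * real CARD('n) * norm A * norm x"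
proof -
  have "norm (A *v x) \<le> onorm ((*v) A) * norm x"
    by (rule onorm) simp
  also have "onorm ((*v) A) \<le> (\<Sum>i\<in>UNIV. \<Sum>j\<in>UNIV. \<bar>A $ i $ j\<bar>)"
    by (rule onorm_le_matrix_component_sum)
  also have "\<dots> \<le> (\<Sum>i\<in>(UNIV::'m set). \<Sum>j\<in>(UNIV::'n set). norm A)"
    by (intro sum_mono order_trans[OF component_le_norm_cart Finite_Cartesian_Product.norm_nth_le])
  also have "\<dots> = real CARD('m) * real CARD('n) * norm A" by simp
  finally show ?thesis by (simp add: mult_right_mono)
qed

lemma inner_mv_bound:
  fixes A :: "real^'n^'m"
  shows "\<bar>a \<bullet> (A *v z)\<bar> \<le> real CARD('m) * real CARD('n) * norm A * norm a * norm z"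
proof -
  have "\<bar>a \<bullet> (A *v z)\<bar> \<le> norm a * norm (A *v z)" by (rule Cauchy_Schwarz_ineq2)
  also have "\<dots> \<le> norm a * (real CARD('m) * real CARD('n) * norm A * norm z)"
    by (intro mult_left_mono mv_norm_bound) auto
  finally show ?thesis by (simp add: ac_simps)
qed

lemma sym_inner:
  fixes Q :: "real^'n^'n"
  assumes "transpose Q = Q"
  shows "x \<bullet> (Q *v y) = y \<bullet> (Q *v x)"
proof -
  have "x \<bullet> (Q *v y) = (x v* Q) \<bullet> y" by (simp add: dot_lmul_matrix)
  also have "x v* Q = transpose Q *v x" by simp
  finally show ?thesis using assms by (simp add: inner_commute)
qed

lemma pd_inj:
  fixes S :: "real^'n^'n"
  assumes "sym_pd S"
  shows "inj ((*v) S)"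
proof -
  have "S *v v = 0 \<Longrightarrow> v = 0" for v
    using assms unfolding sym_pd_def by (metis inner_zero_right less_irrefl)
  then have "\<exists>B. B ** S = mat 1" using matrix_left_invertible_ker by blast
  then show ?thesis using matrix_left_invertible_injective by blast
qed

lemma pd_invertible:
  fixes S :: "real^'n^'n"
  assumes "sym_pd S"
  shows "invertible S"
proof -
  have "S *v v = 0 \<Longrightarrow> v = 0" for v
    using assms unfolding sym_pd_def by (metis inner_zero_right less_irrefl)
  then have "\<exists>B. B ** S = mat 1" using matrix_left_invertible_ker by blast
  then show ?thesis using invertible_left_inverse by blast
qed

lemma inv_props:
  fixes S :: "real^'n^'n"
  assumes "invertible S"
  shows "S ** matrix_inv S = mat 1" "matrix_inv S ** S = mat 1"
proof -
  have "\<exists>A'. S ** A' = mat 1 \<and> A' ** S = mat 1" using assms unfolding invertible_def .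
  then have "S ** matrix_inv S = mat 1 \<and> matrix_inv S ** S = mat 1"
    unfolding matrix_inv_def by (rule someI_ex)
  then show "S ** matrix_inv S = mat 1" "matrix_inv S ** S = mat 1" by auto
qed

lemma inv_unique:
  fixes S B :: "real^'n^'n"
  assumes "invertible S" "B ** S = mat 1"
  shows "B = matrix_inv S"
proof -
  have "B = B ** (S ** matrix_inv S)" using inv_props[OF assms(1)] by simp
  also have "\<dots> = matrix_inv S" by (simp add: matrix_mul_assoc assms(2))
  finally show ?thesis .
qed

lemma inv_sym:
  fixes S :: "real^'n^'n"
  assumes "invertible S" "transpose S = S"
  shows "transpose (matrix_inv S) = matrix_inv S"
proof -
  have "transpose (matrix_inv S) ** S = mat 1"
    using inv_props(1)[OF assms(1)] assms(2)
    by (metis matrix_transpose_mul transpose_mat)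
  then show ?thesis using inv_unique[OF assms(1)] by blast
qed

lemma inv_apply:
  fixes S :: "real^'n^'n"
  assumes "invertible S"
  shows "S *v (matrix_inv S *v z) = z" "matrix_inv S *v (S *v z) = z"
  using inv_props[OF assms] by (simp_all add: matrix_vector_mul_assoc)

lemma inv_pd_bound:
  fixes S :: "real^'n^'n"
  assumes "sym_pd S"
  shows "\<exists>l>0. \<forall>z. l * norm z ^ 2 \<le> z \<bullet> (matrix_inv S *v z)"
proof -
  define Q where "Q = matrix_inv S"
  have inv: "invertible S" by (rule pd_invertible[OF assms])
  have pos: "z \<bullet> (Q *v z) > 0" if "z \<noteq> 0" for z
  proof -
    define w where "w = Q *v z"
    have Sw: "S *v w = z" unfolding w_def Q_def using inv_apply[OF inv] by simp
    then have "w \<noteq> 0" using that by auto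
    then have "w \<bullet> (S *v w) > 0" using assms unfolding sym_pd_def by blast
    then show ?thesis using Sw by (metis w_def inner_commute)
  qed
  have c1: "compact (sphere (0::real^'n) 1)" by simp
  have c2: "sphere (0::real^'n) 1 \<noteq> {}" by simp
  have c3: "continuous_on (sphere 0 1) (\<lambda>z::real^'n. z \<bullet> (Q *v z))"
    by (intro continuous_intros)
  from continuous_attains_inf[OF c1 c2 c3] obtain z0 where
    z0: "z0 \<in> sphere 0 1" "\<And>y. y \<in> sphere 0 1 \<Longrightarrow> z0 \<bullet> (Q *v z0) \<le> y \<bullet> (Q *v y)"
    by blast
  define l where "l = z0 \<bullet> (Q *v z0)"
  have "z0 \<noteq> 0" using z0(1) by auto
  then have lpos: "l > 0" unfolding l_def by (rule pos)
  have "l * norm z ^ 2 \<le> z \<bullet> (Q *v z)" for z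
  proof (cases "z = 0")
    case True then show ?thesis by simp
  next
    case False
    define y where "y = (1 / norm z) *\<^sub>R z"
    have "y \<in> sphere 0 1" unfolding y_def using False by simp
    then have "l \<le> y \<bullet> (Q *v y)" using z0(2) unfolding l_def by blast
    also have "y \<bullet> (Q *v y) = (1 / norm z) * (1 / norm z) * (z \<bullet> (Q *v z))"
      unfolding y_def matrix_vector_mult_scaleR inner_scaleR_left inner_scaleR_right by simp
    finally have "l \<le> (1 / norm z) * (1 / norm z) * (z \<bullet> (Q *v z))" .
    then show ?thesis using False by (simp add: field_simps power2_eq_square)
  qed
  then show ?thesis using lpos unfolding Q_def by blast
qed

lemma det_pd_pos:
  fixes S :: "real^'n^'n"
  assumes "sym_pd S"
  shows "det S > 0"
proof (rule ccontr)
  assume "\<not> det S > 0"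
  then have le: "det S \<le> 0" by simp
  define f where "f t = det (t *\<^sub>R S + (1 - t) *\<^sub>R mat 1)" for t :: real
  have cont: "continuous_on {0..1} f"
    unfolding f_def det_def by (intro continuous_intros)
  have "f 0 = 1" by (simp add: f_def)
  have "f 1 = det S" by (simp add: f_def)
  obtain t where t: "t \<in> {0..1}" "f t = 0"
    using IVT2'[of f 1 0 0] cont le \<open>f 0 = 1\<close> \<open>f 1 = det S\<close> by force
  define A where "A = t *\<^sub>R S + (1 - t) *\<^sub>R mat 1"
  have "sym_pd A"
  proof -
    have "v \<bullet> (A *v v) > 0" if "v \<noteq> 0" for v
    proof -
      have "A *v v = t *\<^sub>R (S *v v) + (1 - t) *\<^sub>R v"
        unfolding A_def by (simp add: matrix_vector_mult_add_rdistrib flip: scaleR_matrix_vector_assoc)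
      then have "v \<bullet> (A *v v) = t * (v \<bullet> (S *v v)) + (1 - t) * (v \<bullet> v)"
        by (simp add: inner_add_right)
      moreover have "v \<bullet> (S *v v) > 0" using assms that unfolding sym_pd_def by auto
      moreover have "v \<bullet> v > 0" using that by simp
      moreover have "t * (v \<bullet> (S *v v)) \<ge> 0" "(1 - t) * (v \<bullet> v) \<ge> 0"
        using t(1) \<open>v \<bullet> (S *v v) > 0\<close> by auto
      moreover have "t * (v \<bullet> (S *v v)) > 0 \<or> (1 - t) * (v \<bullet> v) > 0"
        using t(1) \<open>v \<bullet> (S *v v) > 0\<close> \<open>v \<bullet> v > 0\<close> by (cases "t = 0") auto
      ultimately show ?thesis by linarith
    qed
    moreover have "transpose A = A"
      using assms unfolding A_def sym_pd_def by (simp add: transpose_def vec_eq_iff mat_def)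
    ultimately show ?thesis unfolding sym_pd_def by auto
  qed
  then have "invertible A" by (rule pd_invertible)
  then have "det A \<noteq> 0" by (simp add: invertible_det_nz)
  then show False using t(2) unfolding f_def A_def by simp
qed

definition EE :: "real^'n^'n \<Rightarrow> real^'n \<Rightarrow> real" where
  "EE Q z = exp (- (z \<bullet> (Q *v z)) / 2)"
definition K1 :: "real^'n^'n \<Rightarrow> real^'n \<Rightarrow> real^'n \<Rightarrow> real" where
  "K1 Q a z = (a \<bullet> (Q *v z)) * EE Q z"
definition K2 :: "real^'n^'n \<Rightarrow> real^'n \<Rightarrow> real^'n \<Rightarrow> real^'n \<Rightarrow> real" where
  "K2 Q a b z = (a \<bullet> (Q *v z)) * (b \<bullet> (Q *v z)) * EE Q z"
definition K3 :: "real^'n^'n \<Rightarrow> real^'n \<Rightarrow> real^'n \<Rightarrow> real^'n \<Rightarrow> real^'n \<Rightarrow> real" where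
  "K3 Q a b c z = (a \<bullet> (Q *v z)) * (b \<bullet> (Q *v z)) * (c \<bullet> (Q *v z)) * EE Q z"

lemma poly_exp_bound_aux:
  fixes r c :: real
  assumes "c > 0" "r \<ge> 0"
  shows "r ^ k * exp (- c * r^2) \<le> exp (real k ^ 2 / (4 * c))"
proof (cases "k = 0")
  case True then show ?thesis using assms by simp
next
  case False
  define b where "b = c / real k"
  have b: "b > 0" using assms False by (simp add: b_def)
  have "r \<le> b * r^2 + 1 / (4 * b)"
  proof -
    have "0 \<le> b * (r - 1 / (2 * b))^2" using b by simp
    also have "b * (r - 1 / (2 * b))^2 = b * r^2 - r + 1 / (4 * b)"
      using b by (simp add: power2_eq_square field_simps)
    finally show ?thesis by simp
  qed
  also have "\<dots> \<le> exp (b * r^2 + 1 / (4 * b))"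
    using exp_ge_add_one_self[of "b * r^2 + 1 / (4 * b)"] by linarith
  finally have r: "r \<le> exp (b * r^2 + 1 / (4 * b))" .
  have "r ^ k \<le> exp (b * r^2 + 1 / (4 * b)) ^ k"
    by (rule power_mono[OF r assms(2)])
  also have "\<dots> = exp (real k * (b * r^2 + 1 / (4 * b)))"
    by (simp add: exp_of_nat_mult)
  also have "real k * (b * r^2 + 1 / (4 * b)) = c * r^2 + real k ^ 2 / (4 * c)"
    using False assms by (simp add: b_def field_simps power2_eq_square)
  finally have "r ^ k \<le> exp (c * r^2 + real k ^ 2 / (4 * c))" .
  then have "r ^ k * exp (- c * r^2) \<le> exp (c * r^2 + real k ^ 2 / (4 * c)) * exp (- c * r^2)"
    by (rule mult_right_mono) simp
  also have "\<dots> = exp (real k ^ 2 / (4 * c))" by (simp flip: exp_add)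
  finally show ?thesis .
qed

lemma poly_exp_bound:
  fixes l :: real
  assumes "l > 0"
  shows "\<exists>C. \<forall>z::real^'n. norm z ^ k * exp (- l * norm z ^ 2 / 2) \<le> C"
proof -
  have "l / 2 > 0" using assms by simp
  from poly_exp_bound_aux[OF this norm_ge_zero, of _ k]
  have "norm z ^ k * exp (- l * norm z ^ 2 / 2) \<le> exp (real k ^ 2 / (4 * (l / 2)))" for z :: "real^'n"
    by simp
  then show ?thesis by blast
qed

definition pdb :: "real^'n^'n \<Rightarrow> real \<Rightarrow> bool" where
  "pdb Q l \<longleftrightarrow> l > 0 \<and> (\<forall>z. l * norm z ^ 2 \<le> z \<bullet> (Q *v z))"

lemma EE_pos: "EE Q z > 0" by (simp add: EE_def)

lemma EE_bound:
  assumes "pdb Q l"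
  shows "EE Q z \<le> exp (- l * norm z ^ 2 / 2)"
  using assms unfolding pdb_def EE_def by auto

lemma lin_bound:
  fixes Q :: "real^'n^'n"
  shows "\<bar>a \<bullet> (Q *v z)\<bar> \<le> (real CARD('n) * real CARD('n) * norm Q * norm a) * norm z"
  using inner_mv_bound[of a Q z] by simp

lemma K_bound_gen:
  fixes Q :: "real^'n^'n"
  assumes "pdb Q l" "\<bar>P z\<bar> \<le> \<alpha> * norm z ^ k"
  shows "\<bar>P z * EE Q z\<bar> \<le> \<alpha> * (norm z ^ k * exp (- l * norm z ^ 2 / 2))"
proof -
  have "\<bar>P z * EE Q z\<bar> = \<bar>P z\<bar> * EE Q z" using EE_pos[of Q z] by (simp add: abs_mult)
  also have "\<dots> \<le> (\<alpha> * norm z ^ k) * exp (- l * norm z ^ 2 / 2)"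
    by (intro mult_mono assms(2) EE_bound[OF assms(1)])
       (auto intro: less_imp_le EE_pos order_trans[OF abs_ge_zero assms(2)])
  finally show ?thesis by simp
qed

lemma K_bounded_gen:
  fixes Q :: "real^'n^'n"
  assumes "pdb Q l" "\<And>z. \<bar>P z\<bar> \<le> \<alpha> * norm z ^ k" "\<alpha> \<ge> 0"
  shows "\<exists>C. \<forall>z. \<bar>P z * EE Q z\<bar> \<le> C"
proof -
  obtain C where C: "\<And>z::real^'n. norm z ^ k * exp (- l * norm z ^ 2 / 2) \<le> C"
    using poly_exp_bound[of l k] assms(1) unfolding pdb_def by auto
  have a: "\<alpha> \<ge> 0" using assms(3) .
  have "\<bar>P z * EE Q z\<bar> \<le> \<alpha> * C" for z
    using K_bound_gen[of Q l P z \<alpha> k, OF assms(1) assms(2)[of z]] mult_left_mono[OF C a, of z] by linarith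
  then show ?thesis by blast
qed

lemma EE_bounded: "pdb Q l \<Longrightarrow> \<exists>C. \<forall>z. \<bar>EE Q z\<bar> \<le> C"
  using K_bounded_gen[of Q l "\<lambda>_. 1" 1 0] by simp

lemma K1_bounded:
  fixes Q :: "real^'n^'n"
  shows "pdb Q l \<Longrightarrow> \<exists>C. \<forall>z. \<bar>K1 Q a z\<bar> \<le> C"
  unfolding K1_def
  by (rule K_bounded_gen[where k=1 and \<alpha>="real CARD('n) * real CARD('n) * norm Q * norm a"])
     (simp_all add: lin_bound)

lemma K2_bounded:
  fixes Q :: "real^'n^'n"
  shows "pdb Q l \<Longrightarrow> \<exists>C. \<forall>z. \<bar>K2 Q a b z\<bar> \<le> C"
  unfolding K2_def
proof (rule K_bounded_gen[where k=2])
  fix z :: "real^'n"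
  let ?k = "real CARD('n) * real CARD('n) * norm Q"
  have "\<bar>(a \<bullet> (Q *v z)) * (b \<bullet> (Q *v z))\<bar> \<le> ((?k * norm a) * norm z) * ((?k * norm b) * norm z)"
    unfolding abs_mult by (intro mult_mono lin_bound) auto
  then show "\<bar>(a \<bullet> (Q *v z)) * (b \<bullet> (Q *v z))\<bar> \<le> ((?k * norm a) * (?k * norm b)) * norm z ^ 2"
    by (simp add: power2_eq_square ac_simps)
qed (auto intro!: mult_nonneg_nonneg)

lemma K3_bounded:
  fixes Q :: "real^'n^'n"
  shows "pdb Q l \<Longrightarrow> \<exists>C. \<forall>z. \<bar>K3 Q a b c z\<bar> \<le> C"
  unfolding K3_def
proof (rule K_bounded_gen[where k=3])
  fix z :: "real^'n"
  let ?k = "real CARD('n) * real CARD('n) * norm Q"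
  have "\<bar>(a \<bullet> (Q *v z)) * (b \<bullet> (Q *v z)) * (c \<bullet> (Q *v z))\<bar>
      \<le> ((?k * norm a) * norm z) * ((?k * norm b) * norm z) * ((?k * norm c) * norm z)"
    unfolding abs_mult by (intro mult_mono lin_bound mult_nonneg_nonneg) auto
  then show "\<bar>(a \<bullet> (Q *v z)) * (b \<bullet> (Q *v z)) * (c \<bullet> (Q *v z))\<bar> \<le> ((?k * norm a) * (?k * norm b) * (?k * norm c)) * norm z ^ 3"
    by (simp add: power3_eq_cube ac_simps)
qed (auto intro!: mult_nonneg_nonneg)

lemma EE_cont: "continuous_on UNIV (EE Q)"
  unfolding EE_def by (intro continuous_intros) auto
lemma K1_cont: "continuous_on UNIV (K1 Q a)"
  unfolding K1_def EE_def by (intro continuous_intros) auto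
lemma K2_cont: "continuous_on UNIV (K2 Q a b)"
  unfolding K2_def EE_def by (intro continuous_intros) auto
lemma K3_cont: "continuous_on UNIV (K3 Q a b c)"
  unfolding K3_def EE_def by (intro continuous_intros) auto

lemma line_lin:
  fixes Q :: "real^'n^'m"
  shows "a \<bullet> (Q *v (z + h *\<^sub>R w)) = a \<bullet> (Q *v z) + h * (a \<bullet> (Q *v w))"
  unfolding matrix_vector_right_distrib matrix_vector_mult_scaleR inner_add_right inner_scaleR_right by simp

lemma line_quad:
  fixes Q :: "real^'n^'n"
  assumes "transpose Q = Q"
  shows "(z + h *\<^sub>R w) \<bullet> (Q *v (z + h *\<^sub>R w))
       = z \<bullet> (Q *v z) + h * (2 * (w \<bullet> (Q *v z))) + h^2 * (w \<bullet> (Q *v w))"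
proof -
  have s: "z \<bullet> (Q *v w) = w \<bullet> (Q *v z)" by (rule sym_inner[OF assms])
  show ?thesis
    by (simp add: matrix_vector_right_distrib matrix_vector_mult_scaleR inner_add_right
        inner_add_left s power2_eq_square algebra_simps)
qed

lemma EE_line:
  fixes Q :: "real^'n^'n"
  assumes "transpose Q = Q"
  shows "EE Q (z + h *\<^sub>R w) = exp (- (z \<bullet> (Q *v z) + h * (2 * (w \<bullet> (Q *v z))) + h^2 * (w \<bullet> (Q *v w))) / 2)"
  unfolding EE_def line_quad[OF assms] ..

lemma DEE:
  fixes Q :: "real^'n^'n"
  assumes "transpose Q = Q"
  shows "((\<lambda>h. EE Q (z + h *\<^sub>R w)) has_real_derivative (- (w \<bullet> (Q *v z)) * EE Q z)) (at 0)"
proof -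
  have "((\<lambda>h. exp (- (z \<bullet> (Q *v z) + h * (2 * (w \<bullet> (Q *v z))) + h^2 * (w \<bullet> (Q *v w))) / 2))
      has_real_derivative (- (w \<bullet> (Q *v z)) * EE Q z)) (at 0)"
    by (auto intro!: derivative_eq_intros simp: EE_def)
  then show ?thesis unfolding EE_line[OF assms] .
qed

lemma DK1:
  fixes Q :: "real^'n^'n"
  assumes "transpose Q = Q"
  shows "((\<lambda>h. K1 Q a (z + h *\<^sub>R w)) has_real_derivative
           ((a \<bullet> (Q *v w)) * EE Q z - K2 Q a w z)) (at 0)"
proof -
  have d1: "((\<lambda>h. a \<bullet> (Q *v z) + h * (a \<bullet> (Q *v w))) has_real_derivative (a \<bullet> (Q *v w))) (at 0)"
    by (auto intro!: derivative_eq_intros)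
  have "((\<lambda>h. (a \<bullet> (Q *v z) + h * (a \<bullet> (Q *v w))) * EE Q (z + h *\<^sub>R w)) has_real_derivative
      (a \<bullet> (Q *v w)) * EE Q (z + 0 *\<^sub>R w) + (- (w \<bullet> (Q *v z)) * EE Q z) * (a \<bullet> (Q *v z) + 0 * (a \<bullet> (Q *v w)))) (at 0)"
    by (rule DERIV_mult[OF d1 DEE[OF assms]])
  then show ?thesis unfolding K1_def K2_def line_lin by (simp add: algebra_simps)
qed

lemma DK2:
  fixes Q :: "real^'n^'n"
  assumes "transpose Q = Q"
  shows "((\<lambda>h. K2 Q a b (z + h *\<^sub>R w)) has_real_derivative
           ((a \<bullet> (Q *v w)) * K1 Q b z + (b \<bullet> (Q *v w)) * K1 Q a z - K3 Q a b w z)) (at 0)"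
proof -
  have d1: "((\<lambda>h. (a \<bullet> (Q *v z) + h * (a \<bullet> (Q *v w))) * (b \<bullet> (Q *v z) + h * (b \<bullet> (Q *v w))))
     has_real_derivative ((a \<bullet> (Q *v w)) * (b \<bullet> (Q *v z)) + (a \<bullet> (Q *v z)) * (b \<bullet> (Q *v w)))) (at 0)"
    by (auto intro!: derivative_eq_intros simp: algebra_simps)
  have "((\<lambda>h. ((a \<bullet> (Q *v z) + h * (a \<bullet> (Q *v w))) * (b \<bullet> (Q *v z) + h * (b \<bullet> (Q *v w)))) * EE Q (z + h *\<^sub>R w)) has_real_derivative
      ((a \<bullet> (Q *v w)) * (b \<bullet> (Q *v z)) + (a \<bullet> (Q *v z)) * (b \<bullet> (Q *v w))) * EE Q (z + 0 *\<^sub>R w)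
       + (- (w \<bullet> (Q *v z)) * EE Q z) * ((a \<bullet> (Q *v z) + 0 * (a \<bullet> (Q *v w))) * (b \<bullet> (Q *v z) + 0 * (b \<bullet> (Q *v w))))) (at 0)"
    by (rule DERIV_mult[OF d1 DEE[OF assms]])
  then show ?thesis unfolding K1_def K2_def K3_def line_lin by (simp add: algebra_simps)
qed

lemma deriv_line_shift:
  fixes k :: "'a::real_vector \<Rightarrow> real"
  assumes "\<And>z. ((\<lambda>h. k (z + h *\<^sub>R w)) has_real_derivative k' z) (at 0)"
  shows "((\<lambda>h. k (z + h *\<^sub>R w)) has_real_derivative k' (z + t *\<^sub>R w)) (at t)"
proof -
  have "((\<lambda>h. k ((z + t *\<^sub>R w) + h *\<^sub>R w)) has_real_derivative k' (z + t *\<^sub>R w)) (at 0)"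
    by (rule assms)
  moreover have "(\<lambda>h. k ((z + t *\<^sub>R w) + h *\<^sub>R w)) = (\<lambda>h. (\<lambda>h. k (z + h *\<^sub>R w)) (h + t))"
    by (intro ext arg_cong[where f=k]) (simp add: scaleR_add_left algebra_simps)
  ultimately have "((\<lambda>h. (\<lambda>h. k (z + h *\<^sub>R w)) (h + t)) has_real_derivative k' (z + t *\<^sub>R w)) (at 0)"
    by simp
  then show ?thesis using DERIV_shift[of "\<lambda>h. k (z + h *\<^sub>R w)" "k' (z + t *\<^sub>R w)" 0 t] by simp
qed

lemma lip_from_deriv:
  fixes g :: "real \<Rightarrow> real"
  assumes "\<And>t. (g has_real_derivative g' t) (at t)" "\<And>t. \<bar>g' t\<bar> \<le> B"
  shows "\<bar>g h - g 0\<bar> \<le> B * \<bar>h\<bar>"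
proof (cases "h = 0")
  case True then show ?thesis by simp
next
  case False
  show ?thesis
  proof (cases "h > 0")
    case True
    from MVT2[of 0 h g g'] True assms(1) obtain t where "g h - g 0 = (h - 0) * g' t" by blast
    then have "\<bar>g h - g 0\<bar> = \<bar>h\<bar> * \<bar>g' t\<bar>" by (simp add: abs_mult)
    also have "\<dots> \<le> \<bar>h\<bar> * B" by (intro mult_left_mono assms(2)) auto
    finally show ?thesis by (simp add: mult.commute)
  next
    case False
    with \<open>h \<noteq> 0\<close> have "h < 0" by simp
    from MVT2[of h 0 g g'] this assms(1) obtain t where "g 0 - g h = (0 - h) * g' t" by blast
    then have "\<bar>g h - g 0\<bar> = \<bar>h\<bar> * \<bar>g' t\<bar>" by (simp add: abs_mult abs_minus_commute)
    also have "\<dots> \<le> \<bar>h\<bar> * B" by (intro mult_left_mono assms(2)) auto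
    finally show ?thesis by (simp add: mult.commute)
  qed
qed

lemma cont_meas:
  assumes "sets \<mu> = sets borel" "continuous_on UNIV g"
  shows "g \<in> borel_measurable \<mu>"
  using borel_measurable_continuous_onI[OF assms(2)] measurable_cong_sets[OF assms(1) refl] by blast

lemma cont_shift:
  fixes g :: "real^'n \<Rightarrow> real"
  assumes "continuous_on UNIV g"
  shows "continuous_on UNIV (\<lambda>y. g (x - y))"
  by (rule continuous_on_compose2[OF assms]) (auto intro!: continuous_intros)

lemma intg_shift:
  fixes g :: "real^'n \<Rightarrow> real"
  assumes "prob_space \<mu>" "sets \<mu> = sets borel" "continuous_on UNIV g" "\<And>z. \<bar>g z\<bar> \<le> C"
  shows "integrable \<mu> (\<lambda>y. g (x - y))"
proof -
  interpret prob_space \<mu> by (rule assms(1))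
  show ?thesis
    by (rule integrable_const_bound[where B=C]) (auto intro!: cont_meas[OF assms(2)] cont_shift assms(3,4))
qed

lemma int_line_deriv:
  fixes k k' :: "real^'n \<Rightarrow> real"
  assumes P: "prob_space \<mu>" "sets \<mu> = sets borel"
    and kc: "continuous_on UNIV k" and kb: "\<And>z. \<bar>k z\<bar> \<le> C"
    and kd: "\<And>z. ((\<lambda>h. k (z + h *\<^sub>R w)) has_real_derivative k' z) (at 0)"
    and k'c: "continuous_on UNIV k'" and k'b: "\<And>z. \<bar>k' z\<bar> \<le> C'"
  shows "((\<lambda>h. \<integral>y. k (x + h *\<^sub>R w - y) \<partial>\<mu>) has_real_derivative (\<integral>y. k' (x - y) \<partial>\<mu>)) (at 0)"
proof (rule deriv_integral_dct[where C=C and \<delta>=1 and B=C'])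
  interpret prob_space \<mu> by (rule P(1))
  show "finite_measure \<mu>" by unfold_locales
  have eq: "x + h *\<^sub>R w - y = (x - y) + h *\<^sub>R w" for h y by (simp add: algebra_simps)
  show "(\<lambda>y. k (x + h *\<^sub>R w - y)) \<in> borel_measurable \<mu>" for h
    unfolding eq by (rule cont_meas[OF P(2)]) (rule continuous_on_compose2[OF kc], auto intro!: continuous_intros)
  show "\<bar>k (x + h *\<^sub>R w - y)\<bar> \<le> C" if "\<bar>h\<bar> < 1" for h y by (rule kb)
  show "((\<lambda>h. k (x + h *\<^sub>R w - y)) has_real_derivative k' (x - y)) (at 0)" for y
    unfolding eq by (rule kd)
  show "(\<lambda>y. k' (x - y)) \<in> borel_measurable \<mu>"
    by (rule cont_meas[OF P(2)]) (rule cont_shift[OF k'c])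
  show "(0::real) < 1" by simp
  show "\<bar>k (x + h *\<^sub>R w - y) - k (x + 0 *\<^sub>R w - y)\<bar> \<le> C' * \<bar>h\<bar>" for h y
  proof -
    have "\<bar>k ((x - y) + h *\<^sub>R w) - k ((x - y) + 0 *\<^sub>R w)\<bar> \<le> C' * \<bar>h\<bar>"
      by (rule lip_from_deriv[where g="\<lambda>h. k ((x - y) + h *\<^sub>R w)"])
         (rule deriv_line_shift[OF kd], rule k'b)
    then show ?thesis unfolding eq .
  qed
qed

definition J0 :: "(real^'n) measure \<Rightarrow> real^'n^'n \<Rightarrow> real^'n \<Rightarrow> real" where
  "J0 \<mu> Q x = (\<integral>y. EE Q (x - y) \<partial>\<mu>)"
definition J1 :: "(real^'n) measure \<Rightarrow> real^'n^'n \<Rightarrow> real^'n \<Rightarrow> real^'n \<Rightarrow> real" where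
  "J1 \<mu> Q a x = (\<integral>y. K1 Q a (x - y) \<partial>\<mu>)"
definition J2 :: "(real^'n) measure \<Rightarrow> real^'n^'n \<Rightarrow> real^'n \<Rightarrow> real^'n \<Rightarrow> real^'n \<Rightarrow> real" where
  "J2 \<mu> Q a b x = (\<integral>y. K2 Q a b (x - y) \<partial>\<mu>)"
definition J3 :: "(real^'n) measure \<Rightarrow> real^'n^'n \<Rightarrow> real^'n \<Rightarrow> real^'n \<Rightarrow> real^'n \<Rightarrow> real^'n \<Rightarrow> real" where
  "J3 \<mu> Q a b c x = (\<integral>y. K3 Q a b c (x - y) \<partial>\<mu>)"

locale gsetup =
  fixes \<mu> :: "(real^'n) measure" and Q :: "real^'n^'n" and l :: real
  assumes P: "prob_space \<mu>" and Ps: "sets \<mu> = sets borel"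
    and pd: "pdb Q l" and sym: "transpose Q = Q"
begin

lemma intE: "integrable \<mu> (\<lambda>y. EE Q (x - y))"
proof -
  obtain C where "\<And>z. \<bar>EE Q z\<bar> \<le> C" using EE_bounded[OF pd] by blast
  then show ?thesis by (rule intg_shift[OF P Ps EE_cont])
qed

lemma intK1: "integrable \<mu> (\<lambda>y. K1 Q a (x - y))"
proof -
  obtain C where "\<And>z. \<bar>K1 Q a z\<bar> \<le> C" using K1_bounded[OF pd] by blast
  then show ?thesis by (rule intg_shift[OF P Ps K1_cont])
qed

lemma intK2: "integrable \<mu> (\<lambda>y. K2 Q a b (x - y))"
proof -
  obtain C where "\<And>z. \<bar>K2 Q a b z\<bar> \<le> C" using K2_bounded[OF pd] by blast
  then show ?thesis by (rule intg_shift[OF P Ps K2_cont])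
qed

lemma intK3: "integrable \<mu> (\<lambda>y. K3 Q a b c (x - y))"
proof -
  obtain C where "\<And>z. \<bar>K3 Q a b c z\<bar> \<le> C" using K3_bounded[OF pd] by blast
  then show ?thesis by (rule intg_shift[OF P Ps K3_cont])
qed

lemma J0_pos: "J0 \<mu> Q x > 0"
proof -
  interpret prob_space \<mu> by (rule P)
  have ge: "J0 \<mu> Q x \<ge> 0" unfolding J0_def by (rule Bochner_Integration.integral_nonneg) (auto intro: less_imp_le EE_pos)
  have "J0 \<mu> Q x \<noteq> 0"
  proof
    assume "J0 \<mu> Q x = 0"
    then have "AE y in \<mu>. EE Q (x - y) = 0"
      unfolding J0_def by (subst (asm) integral_nonneg_eq_0_iff_AE) (auto intro: intE less_imp_le EE_pos)
    then have "AE y in \<mu>. False" by eventually_elim (metis EE_pos less_irrefl)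
    then show False by simp
  qed
  with ge show ?thesis by simp
qed

lemma DJ0: "((\<lambda>h. J0 \<mu> Q (x + h *\<^sub>R w)) has_real_derivative - J1 \<mu> Q w x) (at 0)"
proof -
  obtain C where C: "\<And>z. \<bar>EE Q z\<bar> \<le> C" using EE_bounded[OF pd] by blast
  obtain C' where C': "\<And>z. \<bar>K1 Q w z\<bar> \<le> C'" using K1_bounded[OF pd] by blast
  have d: "((\<lambda>h. EE Q (z + h *\<^sub>R w)) has_real_derivative - K1 Q w z) (at 0)" for z
    using DEE[OF sym, of z w] by (simp add: K1_def)
  have "((\<lambda>h. \<integral>y. EE Q (x + h *\<^sub>R w - y) \<partial>\<mu>) has_real_derivative (\<integral>y. - K1 Q w (x - y) \<partial>\<mu>)) (at 0)"
    by (rule int_line_deriv[OF P Ps EE_cont C d]) (auto intro!: continuous_intros K1_cont C')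
  then show ?thesis unfolding J0_def J1_def by simp
qed

lemma DJ1: "((\<lambda>h. J1 \<mu> Q a (x + h *\<^sub>R w)) has_real_derivative
    (a \<bullet> (Q *v w)) * J0 \<mu> Q x - J2 \<mu> Q a w x) (at 0)"
proof -
  obtain C where C: "\<And>z. \<bar>K1 Q a z\<bar> \<le> C" using K1_bounded[OF pd] by blast
  obtain C0 where C0: "\<And>z. \<bar>EE Q z\<bar> \<le> C0" using EE_bounded[OF pd] by blast
  obtain C2 where C2: "\<And>z. \<bar>K2 Q a w z\<bar> \<le> C2" using K2_bounded[OF pd] by blast
  have b: "\<bar>(a \<bullet> (Q *v w)) * EE Q z - K2 Q a w z\<bar> \<le> \<bar>a \<bullet> (Q *v w)\<bar> * C0 + C2" for z
  proof -
    have "\<bar>(a \<bullet> (Q *v w)) * EE Q z - K2 Q a w z\<bar> \<le> \<bar>a \<bullet> (Q *v w)\<bar> * \<bar>EE Q z\<bar> + \<bar>K2 Q a w z\<bar>"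
      by (simp add: abs_mult[symmetric] abs_triangle_ineq4)
    also have "\<dots> \<le> \<bar>a \<bullet> (Q *v w)\<bar> * C0 + C2" by (intro add_mono mult_left_mono C0 C2) auto
    finally show ?thesis .
  qed
  have "((\<lambda>h. \<integral>y. K1 Q a (x + h *\<^sub>R w - y) \<partial>\<mu>) has_real_derivative
      (\<integral>y. (a \<bullet> (Q *v w)) * EE Q (x - y) - K2 Q a w (x - y) \<partial>\<mu>)) (at 0)"
    by (rule int_line_deriv[OF P Ps K1_cont C DK1[OF sym]])
       (auto intro!: continuous_intros K2_cont EE_cont b)
  moreover have "(\<integral>y. (a \<bullet> (Q *v w)) * EE Q (x - y) - K2 Q a w (x - y) \<partial>\<mu>)
      = (a \<bullet> (Q *v w)) * J0 \<mu> Q x - J2 \<mu> Q a w x"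
    unfolding J0_def J2_def by (subst Bochner_Integration.integral_diff) (auto intro: intE intK2)
  ultimately show ?thesis unfolding J1_def by simp
qed

lemma DJ2: "((\<lambda>h. J2 \<mu> Q a b (x + h *\<^sub>R w)) has_real_derivative
    (a \<bullet> (Q *v w)) * J1 \<mu> Q b x + (b \<bullet> (Q *v w)) * J1 \<mu> Q a x - J3 \<mu> Q a b w x) (at 0)"
proof -
  obtain C where C: "\<And>z. \<bar>K2 Q a b z\<bar> \<le> C" using K2_bounded[OF pd] by blast
  obtain Ca where Ca: "\<And>z. \<bar>K1 Q a z\<bar> \<le> Ca" using K1_bounded[OF pd] by blast
  obtain Cb where Cb: "\<And>z. \<bar>K1 Q b z\<bar> \<le> Cb" using K1_bounded[OF pd] by blast
  obtain C3 where C3: "\<And>z. \<bar>K3 Q a b w z\<bar> \<le> C3" using K3_bounded[OF pd] by blast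
  have bd: "\<bar>(a \<bullet> (Q *v w)) * K1 Q b z + (b \<bullet> (Q *v w)) * K1 Q a z - K3 Q a b w z\<bar>
      \<le> \<bar>a \<bullet> (Q *v w)\<bar> * Cb + \<bar>b \<bullet> (Q *v w)\<bar> * Ca + C3" for z
  proof -
    have "\<bar>(a \<bullet> (Q *v w)) * K1 Q b z + (b \<bullet> (Q *v w)) * K1 Q a z - K3 Q a b w z\<bar>
        \<le> \<bar>a \<bullet> (Q *v w)\<bar> * \<bar>K1 Q b z\<bar> + \<bar>b \<bullet> (Q *v w)\<bar> * \<bar>K1 Q a z\<bar> + \<bar>K3 Q a b w z\<bar>"
      by (simp add: abs_mult[symmetric])
    also have "\<dots> \<le> \<bar>a \<bullet> (Q *v w)\<bar> * Cb + \<bar>b \<bullet> (Q *v w)\<bar> * Ca + C3"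
      by (intro add_mono mult_left_mono Ca Cb C3) auto
    finally show ?thesis .
  qed
  have "((\<lambda>h. \<integral>y. K2 Q a b (x + h *\<^sub>R w - y) \<partial>\<mu>) has_real_derivative
      (\<integral>y. (a \<bullet> (Q *v w)) * K1 Q b (x - y) + (b \<bullet> (Q *v w)) * K1 Q a (x - y) - K3 Q a b w (x - y) \<partial>\<mu>)) (at 0)"
    by (rule int_line_deriv[OF P Ps K2_cont C DK2[OF sym]])
       (auto intro!: continuous_intros K1_cont K3_cont bd)
  moreover have "(\<integral>y. (a \<bullet> (Q *v w)) * K1 Q b (x - y) + (b \<bullet> (Q *v w)) * K1 Q a (x - y) - K3 Q a b w (x - y) \<partial>\<mu>)
      = (a \<bullet> (Q *v w)) * J1 \<mu> Q b x + (b \<bullet> (Q *v w)) * J1 \<mu> Q a x - J3 \<mu> Q a b w x"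
    unfolding J1_def J3_def
    by (simp add: intK1 intK3)
  ultimately show ?thesis unfolding J2_def by simp
qed

end

lemma vec_vderiv:
  fixes f :: "real \<Rightarrow> real^'n"
  assumes "\<And>k. ((\<lambda>h. f h $ k) has_real_derivative (f' $ k)) (at a)"
  shows "(f has_vector_derivative f') (at a)"
  unfolding has_vector_derivative_def
proof (subst has_derivative_componentwise_within, intro ballI)
  fix i :: "real^'n" assume "i \<in> Basis"
  then obtain k where i: "i = axis k 1" by (auto simp: Basis_vec_def)
  have "((\<lambda>h. f h $ k) has_derivative (*) (f' $ k)) (at a)"
    using assms[of k] unfolding has_field_derivative_def .
  moreover have "(\<lambda>x. f x \<bullet> i) = (\<lambda>h. f h $ k)" by (simp add: i inner_axis)
  moreover have "(\<lambda>x. (x *\<^sub>R f') \<bullet> i) = (*) (f' $ k)" by (auto simp: i inner_axis)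
  ultimately show "((\<lambda>x. f x \<bullet> i) has_derivative (\<lambda>x. (x *\<^sub>R f') \<bullet> i)) (at a)" by simp
qed

definition sc :: "(real^'n) measure \<Rightarrow> real^'n^'n \<Rightarrow> real^'n \<Rightarrow> real^'n" where
  "sc \<mu> Q x = (\<chi> k. - J1 \<mu> Q (axis k 1) x / J0 \<mu> Q x)"

lemma score_repr:
  fixes S :: "real^'n^'n"
  assumes P: "prob_space \<mu>" "sets \<mu> = sets borel" and S: "sym_pd S"
  shows "score (smoothed_density \<mu> S) = sc \<mu> (matrix_inv S)"
proof -
  define Q where "Q = matrix_inv S"
  obtain l where l: "l > 0" "\<forall>z. l * norm z ^ 2 \<le> z \<bullet> (Q *v z)"
    using inv_pd_bound[OF S] unfolding Q_def by blast
  have symQ: "transpose Q = Q"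
    unfolding Q_def using inv_sym[OF pd_invertible[OF S]] S unfolding sym_pd_def by blast
  have pdQ: "pdb Q l" unfolding pdb_def using l by blast
  interpret gsetup \<mu> Q l by (rule gsetup.intro[OF P pdQ symQ])
  define sq where "sq = sqrt ((2 * pi) ^ CARD('n) * det S)"
  have sq: "sq > 0" unfolding sq_def using det_pd_pos[OF S] by simp
  have sd: "smoothed_density \<mu> S y = J0 \<mu> Q y / sq" for y
    unfolding smoothed_density_def gauss_density_def J0_def EE_def Q_def sq_def by simp
  show ?thesis
  proof (rule ext)
    fix x
    show "score (smoothed_density \<mu> S) x = sc \<mu> (matrix_inv S) x"
      unfolding score_def grad_def sc_def Q_def[symmetric]
    proof (rule Cart_lambda_cong)
      fix k
      have j0: "J0 \<mu> Q (x + 0 *\<^sub>R axis k 1) > 0" by (rule J0_pos)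
      have "((\<lambda>h. ln (J0 \<mu> Q (x + h *\<^sub>R axis k 1) / sq)) has_real_derivative
          (1 / (J0 \<mu> Q (x + 0 *\<^sub>R axis k 1) / sq)) * (- J1 \<mu> Q (axis k 1) x / sq)) (at 0)"
        using j0 sq by (auto intro!: derivative_eq_intros DJ0)
      then have "((\<lambda>h. ln (smoothed_density \<mu> S (x + h *\<^sub>R axis k 1))) has_real_derivative
          - J1 \<mu> Q (axis k 1) x / J0 \<mu> Q x) (at 0)"
        using sq j0 by (simp add: sd)
      then show "deriv (\<lambda>h. ln (smoothed_density \<mu> S (x + h *\<^sub>R axis k 1))) 0
          = - J1 \<mu> Q (axis k 1) x / J0 \<mu> Q x"
        by (rule DERIV_imp_deriv)
    qed
  qed
qed

definition Dsc :: "(real^'n) measure \<Rightarrow> real^'n^'n \<Rightarrow> real^'n \<Rightarrow> real^'n \<Rightarrow> real^'n" where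
  "Dsc \<mu> Q y v = (\<chi> k. - (axis k 1 \<bullet> (Q *v v)) + J2 \<mu> Q (axis k 1) v y / J0 \<mu> Q y
      - J1 \<mu> Q (axis k 1) y * J1 \<mu> Q v y / (J0 \<mu> Q y)^2)"

definition DDsc :: "(real^'n) measure \<Rightarrow> real^'n^'n \<Rightarrow> real^'n \<Rightarrow> real^'n \<Rightarrow> real^'n \<Rightarrow> real^'n" where
  "DDsc \<mu> Q y v w = (\<chi> k. - J3 \<mu> Q (axis k 1) v w y / J0 \<mu> Q y
      + (J2 \<mu> Q (axis k 1) v y * J1 \<mu> Q w y + J2 \<mu> Q (axis k 1) w y * J1 \<mu> Q v y
         + J1 \<mu> Q (axis k 1) y * J2 \<mu> Q v w y) / (J0 \<mu> Q y)^2
      - 2 * J1 \<mu> Q (axis k 1) y * J1 \<mu> Q v y * J1 \<mu> Q w y / (J0 \<mu> Q y)^3)"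

context gsetup begin

lemma sc_D: "((\<lambda>\<sigma>. sc \<mu> Q (y + \<sigma> *\<^sub>R v)) has_vector_derivative Dsc \<mu> Q y v) (at 0)"
proof (rule vec_vderiv)
  fix k
  let ?e = "axis k 1 :: real^'n"
  have n0: "J0 \<mu> Q y \<noteq> 0" using J0_pos[of y] by simp
  have "((\<lambda>h. - J1 \<mu> Q ?e (y + h *\<^sub>R v) / J0 \<mu> Q (y + h *\<^sub>R v)) has_real_derivative
     ((- ((?e \<bullet> (Q *v v)) * J0 \<mu> Q y - J2 \<mu> Q ?e v y)) * J0 \<mu> Q (y + 0 *\<^sub>R v)
       - (- J1 \<mu> Q ?e (y + 0 *\<^sub>R v)) * (- J1 \<mu> Q v y)) / (J0 \<mu> Q (y + 0 *\<^sub>R v) * J0 \<mu> Q (y + 0 *\<^sub>R v))) (at 0)"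
    by (rule DERIV_divide[OF DERIV_minus[OF DJ1] DJ0]) (simp add: n0)
  then have "((\<lambda>h. sc \<mu> Q (y + h *\<^sub>R v) $ k) has_real_derivative
     ((- ((?e \<bullet> (Q *v v)) * J0 \<mu> Q y - J2 \<mu> Q ?e v y)) * J0 \<mu> Q (y + 0 *\<^sub>R v)
       - (- J1 \<mu> Q ?e (y + 0 *\<^sub>R v)) * (- J1 \<mu> Q v y)) / (J0 \<mu> Q (y + 0 *\<^sub>R v) * J0 \<mu> Q (y + 0 *\<^sub>R v))) (at 0)"
    unfolding sc_def vec_lambda_beta .
  moreover have "((- ((?e \<bullet> (Q *v v)) * J0 \<mu> Q y - J2 \<mu> Q ?e v y)) * J0 \<mu> Q (y + 0 *\<^sub>R v)
       - (- J1 \<mu> Q ?e (y + 0 *\<^sub>R v)) * (- J1 \<mu> Q v y)) / (J0 \<mu> Q (y + 0 *\<^sub>R v) * J0 \<mu> Q (y + 0 *\<^sub>R v))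
     = Dsc \<mu> Q y v $ k"
    unfolding Dsc_def using n0 by (simp add: field_simps power2_eq_square)
  ultimately show "((\<lambda>h. sc \<mu> Q (y + h *\<^sub>R v) $ k) has_real_derivative Dsc \<mu> Q y v $ k) (at 0)"
    by (rule DERIV_cong)
qed

lemma sc_vd: "vector_derivative (\<lambda>\<sigma>. sc \<mu> Q (y + \<sigma> *\<^sub>R v)) (at 0) = Dsc \<mu> Q y v"
  by (rule vector_derivative_at[OF sc_D])

lemma Dsc_D: "((\<lambda>r. Dsc \<mu> Q (x + r *\<^sub>R w) v) has_vector_derivative DDsc \<mu> Q x v w) (at 0)"
proof (rule vec_vderiv)
  fix k
  let ?e = "axis k 1 :: real^'n"
  let ?n = "\<lambda>r. J0 \<mu> Q (x + r *\<^sub>R w)"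
  let ?A = "\<lambda>r. J1 \<mu> Q ?e (x + r *\<^sub>R w)"
  let ?B = "\<lambda>r. J1 \<mu> Q v (x + r *\<^sub>R w)"
  let ?C = "\<lambda>r. J2 \<mu> Q ?e v (x + r *\<^sub>R w)"
  have n0: "J0 \<mu> Q x \<noteq> 0" using J0_pos[of x] by simp
  note dn = DJ0[of x w] and dA = DJ1[of ?e x w] and dB = DJ1[of v x w] and dC = DJ2[of ?e v x w]
  have d1: "((\<lambda>r. ?C r / ?n r) has_real_derivative
      (((?e \<bullet> (Q *v w)) * J1 \<mu> Q v x + (v \<bullet> (Q *v w)) * J1 \<mu> Q ?e x - J3 \<mu> Q ?e v w x) * ?n 0
        - ?C 0 * (- J1 \<mu> Q w x)) / (?n 0 * ?n 0)) (at 0)"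
    by (rule DERIV_divide[OF dC dn]) (simp add: n0)
  have dAB: "((\<lambda>r. ?A r * ?B r) has_real_derivative
      ((?e \<bullet> (Q *v w)) * J0 \<mu> Q x - J2 \<mu> Q ?e w x) * ?B 0 + ((v \<bullet> (Q *v w)) * J0 \<mu> Q x - J2 \<mu> Q v w x) * ?A 0) (at 0)"
    by (rule DERIV_mult[OF dA dB])
  have dn2: "((\<lambda>r. (?n r)^2) has_real_derivative of_nat 2 * ((- J1 \<mu> Q w x) * ?n 0 ^ (2 - Suc 0))) (at 0)"
    by (rule DERIV_power[OF dn])
  have d2: "((\<lambda>r. ?A r * ?B r / (?n r)^2) has_real_derivative
      ((((?e \<bullet> (Q *v w)) * J0 \<mu> Q x - J2 \<mu> Q ?e w x) * ?B 0 + ((v \<bullet> (Q *v w)) * J0 \<mu> Q x - J2 \<mu> Q v w x) * ?A 0) * (?n 0)^2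
        - ?A 0 * ?B 0 * (of_nat 2 * ((- J1 \<mu> Q w x) * ?n 0 ^ (2 - Suc 0)))) / ((?n 0)^2 * (?n 0)^2)) (at 0)"
    by (rule DERIV_divide[OF dAB dn2]) (simp add: n0)
  have d3: "((\<lambda>r. - (?e \<bullet> (Q *v v)) + ?C r / ?n r - ?A r * ?B r / (?n r)^2) has_real_derivative
      0 + (((?e \<bullet> (Q *v w)) * J1 \<mu> Q v x + (v \<bullet> (Q *v w)) * J1 \<mu> Q ?e x - J3 \<mu> Q ?e v w x) * ?n 0
        - ?C 0 * (- J1 \<mu> Q w x)) / (?n 0 * ?n 0)
      - ((((?e \<bullet> (Q *v w)) * J0 \<mu> Q x - J2 \<mu> Q ?e w x) * ?B 0 + ((v \<bullet> (Q *v w)) * J0 \<mu> Q x - J2 \<mu> Q v w x) * ?A 0) * (?n 0)^2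
        - ?A 0 * ?B 0 * (of_nat 2 * ((- J1 \<mu> Q w x) * ?n 0 ^ (2 - Suc 0)))) / ((?n 0)^2 * (?n 0)^2)) (at 0)"
    by (intro DERIV_diff DERIV_add DERIV_const d1 d2)
  show "((\<lambda>r. Dsc \<mu> Q (x + r *\<^sub>R w) v $ k) has_real_derivative DDsc \<mu> Q x v w $ k) (at 0)"
  proof -
    have "(\<lambda>r. Dsc \<mu> Q (x + r *\<^sub>R w) v $ k) = (\<lambda>r. - (?e \<bullet> (Q *v v)) + ?C r / ?n r - ?A r * ?B r / (?n r)^2)"
      unfolding Dsc_def by simp
    moreover have "0 + (((?e \<bullet> (Q *v w)) * J1 \<mu> Q v x + (v \<bullet> (Q *v w)) * J1 \<mu> Q ?e x - J3 \<mu> Q ?e v w x) * ?n 0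
        - ?C 0 * (- J1 \<mu> Q w x)) / (?n 0 * ?n 0)
      - ((((?e \<bullet> (Q *v w)) * J0 \<mu> Q x - J2 \<mu> Q ?e w x) * ?B 0 + ((v \<bullet> (Q *v w)) * J0 \<mu> Q x - J2 \<mu> Q v w x) * ?A 0) * (?n 0)^2
        - ?A 0 * ?B 0 * (of_nat 2 * ((- J1 \<mu> Q w x) * ?n 0 ^ (2 - Suc 0)))) / ((?n 0)^2 * (?n 0)^2)
      = DDsc \<mu> Q x v w $ k"
      unfolding DDsc_def using n0 by (simp add: field_simps power2_eq_square power3_eq_cube)
    ultimately show ?thesis using d3 by simp
  qed
qed

lemma dderiv2_sc: "dderiv2 (\<lambda>r \<sigma>. sc \<mu> Q (x + r *\<^sub>R w + \<sigma> *\<^sub>R v)) = DDsc \<mu> Q x v w"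
proof -
  have "(\<lambda>r. vector_derivative (\<lambda>\<sigma>. sc \<mu> Q (x + r *\<^sub>R w + \<sigma> *\<^sub>R v)) (at 0)) = (\<lambda>r. Dsc \<mu> Q (x + r *\<^sub>R w) v)"
    by (intro ext sc_vd)
  then show ?thesis unfolding dderiv2_def by (simp add: vector_derivative_at[OF Dsc_D])
qed

end

lemma vd_quot:
  fixes f :: "real \<Rightarrow> 'a::real_normed_vector"
  assumes "(f has_vector_derivative D) (at 0)"
  shows "((\<lambda>h. (1/h) *\<^sub>R (f h - f 0)) \<longlongrightarrow> D) (at 0)"
proof -
  have "((\<lambda>h. norm (f (0 + h) - f 0 - h *\<^sub>R D) / norm h) \<longlongrightarrow> 0) (at 0)"
    using assms unfolding has_vector_derivative_def has_derivative_at by blast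
  then have a: "((\<lambda>h. norm (f h - f 0 - h *\<^sub>R D) / norm h) \<longlongrightarrow> 0) (at 0)" by simp
  have ne: "\<forall>\<^sub>F h in at (0::real). h \<noteq> 0" by (simp add: eventually_at_filter)
  have "\<forall>\<^sub>F h in at 0. norm (f h - f 0 - h *\<^sub>R D) / norm h = norm ((1/h) *\<^sub>R (f h - f 0) - D)"
    using ne
  proof eventually_elim
    case (elim h)
    have "(1/h) *\<^sub>R (f h - f 0) - D = (1/h) *\<^sub>R (f h - f 0 - h *\<^sub>R D)"
      using elim by (simp add: scaleR_diff_right)
    then show ?case by (simp add: divide_inverse mult.commute)
  qed
  from tendsto_cong[OF this] a have "((\<lambda>h. norm ((1/h) *\<^sub>R (f h - f 0) - D)) \<longlongrightarrow> 0) (at 0)" by simp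
  then show ?thesis by (simp add: tendsto_norm_zero_iff LIM_zero_iff)
qed

lemma bl_mv: "bounded_linear (\<lambda>A::real^'n^'m. A *v w)"
proof (rule bounded_linear_intro[where K="real CARD('m) * real CARD('n) * norm w"])
  show "(x + y) *v w = x *v w + y *v w" for x y :: "real^'n^'m" by (simp add: matrix_vector_mult_add_rdistrib)
  show "(r *\<^sub>R x) *v w = r *\<^sub>R (x *v w)" for r and x :: "real^'n^'m" by (simp add: scaleR_matrix_vector_assoc)
  show "norm (x *v w) \<le> norm x * (real CARD('m) * real CARD('n) * norm w)" for x :: "real^'n^'m"
    using mv_norm_bound[of x w] by (simp add: ac_simps)
qed

lemma bl_transpose: "bounded_linear (transpose :: real^'n^'m \<Rightarrow> real^'m^'n)"
proof -
  have "linear (transpose :: real^'n^'m \<Rightarrow> real^'m^'n)"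
    by (rule linearI) (simp_all add: transpose_def vec_eq_iff)
  then show ?thesis by (simp add: linear_conv_bounded_linear)
qed

lemma pd_bound_gen:
  fixes A :: "real^'n^'n"
  assumes "\<And>z. z \<noteq> 0 \<Longrightarrow> z \<bullet> (A *v z) > 0"
  shows "\<exists>l>0. \<forall>z. l * norm z ^ 2 \<le> z \<bullet> (A *v z)"
proof -
  have c1: "compact (sphere (0::real^'n) 1)" by simp
  have c2: "sphere (0::real^'n) 1 \<noteq> {}" by simp
  have c3: "continuous_on (sphere 0 1) (\<lambda>z::real^'n. z \<bullet> (A *v z))"
    by (intro continuous_intros)
  from continuous_attains_inf[OF c1 c2 c3] obtain z0 where
    z0: "z0 \<in> sphere 0 1" "\<And>y. y \<in> sphere 0 1 \<Longrightarrow> z0 \<bullet> (A *v z0) \<le> y \<bullet> (A *v y)"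
    by blast
  define l where "l = z0 \<bullet> (A *v z0)"
  have "z0 \<noteq> 0" using z0(1) by auto
  then have lpos: "l > 0" unfolding l_def by (rule assms)
  have "l * norm z ^ 2 \<le> z \<bullet> (A *v z)" for z
  proof (cases "z = 0")
    case True then show ?thesis by simp
  next
    case False
    define y where "y = (1 / norm z) *\<^sub>R z"
    have "y \<in> sphere 0 1" unfolding y_def using False by simp
    then have "l \<le> y \<bullet> (A *v y)" using z0(2) unfolding l_def by blast
    also have "y \<bullet> (A *v y) = (1 / norm z) * (1 / norm z) * (z \<bullet> (A *v z))"
      unfolding y_def matrix_vector_mult_scaleR inner_scaleR_left inner_scaleR_right by simp
    finally have "l \<le> (1 / norm z) * (1 / norm z) * (z \<bullet> (A *v z))" .
    then show ?thesis using False by (simp add: field_simps power2_eq_square)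
  qed
  then show ?thesis using lpos by blast
qed

lemma exp_lip_key:
  fixes p q c :: real
  assumes "p \<ge> q" "q \<ge> c"
  shows "exp (- q) - exp (- p) \<le> (p - q) * exp (- c)"
proof -
  have "exp (- q) - exp (- p) = exp (- q) * (1 - exp (- (p - q)))" by (simp add: algebra_simps flip: exp_add)
  also have "1 - exp (- (p - q)) \<le> p - q" using exp_ge_add_one_self[of "q - p"] by (simp add: algebra_simps)
  then have "exp (- q) * (1 - exp (- (p - q))) \<le> exp (- q) * (p - q)" by (intro mult_left_mono) auto
  also have "\<dots> \<le> exp (- c) * (p - q)" using assms by (intro mult_right_mono) auto
  finally show ?thesis by (simp add: mult.commute)
qed

lemma exp_lip:
  fixes a b c :: real
  assumes "a \<ge> c" "b \<ge> c"
  shows "\<bar>exp (- a) - exp (- b)\<bar> \<le> \<bar>a - b\<bar> * exp (- c)"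
proof (cases "a \<ge> b")
  case True
  then have "exp (- a) \<le> exp (- b)" by simp
  then show ?thesis using exp_lip_key[OF True assms(2)] True by (simp add: abs_if)
next
  case False
  then have ba: "b \<ge> a" by simp
  then have "exp (- b) \<le> exp (- a)" by simp
  then show ?thesis using exp_lip_key[OF ba assms(1)] False by (simp add: abs_if)
qed

locale qcurve =
  fixes m :: "real \<Rightarrow> real^'n^'n" and D :: "real^'n^'n"
  assumes md: "(m has_vector_derivative D) (at 0)" and mpd: "\<And>h. sym_pd (m h)"
begin


lemma Dsym: "transpose D = D"
proof -
  have "((\<lambda>h. transpose (m h)) has_vector_derivative transpose D) (at 0)"
    by (rule bounded_linear.has_vector_derivative[OF bl_transpose md])
  moreover have "(\<lambda>h. transpose (m h)) = m" using mpd unfolding sym_pd_def by auto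
  ultimately have "(m has_vector_derivative transpose D) (at 0)" by simp
  then show ?thesis using vector_derivative_unique_at[OF md] by metis
qed

lemma inv_m: "invertible (m h)" by (rule pd_invertible[OF mpd])
lemma Qsym: "transpose (matrix_inv (m h)) = matrix_inv (m h)"
  using inv_sym[OF inv_m] mpd unfolding sym_pd_def by blast
lemma Qapp: "m h *v (matrix_inv (m h) *v u) = u" "matrix_inv (m h) *v (m h *v u) = u"
  using inv_apply[OF inv_m] by auto


lemma Qdiff: "(matrix_inv (m h) - matrix_inv (m 0)) *v z = matrix_inv (m h) *v ((m 0 - m h) *v (matrix_inv (m 0) *v z))"
proof -
  have "matrix_inv (m h) *v ((m 0 - m h) *v (matrix_inv (m 0) *v z)) = matrix_inv (m h) *v (m 0 *v (matrix_inv (m 0) *v z)) - matrix_inv (m h) *v (m h *v (matrix_inv (m 0) *v z))"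
    by (simp add: matrix_vector_mult_diff_rdistrib matrix_vector_mult_diff_distrib)
  also have "\<dots> = matrix_inv (m h) *v z - matrix_inv (m 0) *v z" by (simp add: Qapp)
  finally show ?thesis by (simp add: matrix_vector_mult_diff_rdistrib)
qed

lemma ev_Qbound: "\<exists>L>0. \<forall>\<^sub>F h in at 0. \<forall>u. norm (matrix_inv (m h) *v u) \<le> L * norm u"
proof -
  obtain l0 where l0: "l0 > 0" "\<And>v. l0 * norm v ^ 2 \<le> v \<bullet> (m 0 *v v)"
    using pd_bound_gen[of "m 0"] mpd unfolding sym_pd_def by blast
  have "continuous (at 0) m" using has_vector_derivative_continuous[OF md] .
  then have "((\<lambda>h. m h - m 0) \<longlongrightarrow> 0) (at 0)" by (simp add: continuous_at LIM_zero)
  then have "((\<lambda>h. norm (m h - m 0)) \<longlongrightarrow> 0) (at 0)" by (simp add: tendsto_norm_zero)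
  moreover have "l0 / (2 * (real CARD('n) * real CARD('n))) > 0" using l0 by simp
  ultimately have ev: "\<forall>\<^sub>F h in at 0. norm (m h - m 0) < l0 / (2 * (real CARD('n) * real CARD('n)))"
    by (rule order_tendstoD)
  have "\<forall>\<^sub>F h in at 0. \<forall>u. norm (matrix_inv (m h) *v u) \<le> (2 / l0) * norm u"
    using ev
  proof eventually_elim
    case (elim h)
    have pdh: "(l0 / 2) * norm v ^ 2 \<le> v \<bullet> (m h *v v)" for v
    proof -
      have "\<bar>v \<bullet> ((m h - m 0) *v v)\<bar> \<le> (real CARD('n) * real CARD('n)) * norm (m h - m 0) * norm v * norm v"
        using inner_mv_bound[of v "m h - m 0" v] by simp
      also have "\<dots> \<le> (real CARD('n) * real CARD('n)) * (l0 / (2 * (real CARD('n) * real CARD('n)))) * norm v * norm v"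
        using elim by (intro mult_right_mono mult_left_mono) auto
      also have "\<dots> = (l0 / 2) * norm v ^ 2" by (simp add: power2_eq_square)
      finally have "\<bar>v \<bullet> ((m h - m 0) *v v)\<bar> \<le> (l0 / 2) * norm v ^ 2" .
      moreover have "v \<bullet> (m h *v v) = v \<bullet> (m 0 *v v) + v \<bullet> ((m h - m 0) *v v)"
        by (simp add: matrix_vector_mult_diff_rdistrib inner_diff_right)
      ultimately show ?thesis using l0(2)[of v] by linarith
    qed
    show ?case
    proof
      fix u
      define v where "v = matrix_inv (m h) *v u"
      have u: "m h *v v = u" unfolding v_def by (simp add: Qapp)
      have "(l0 / 2) * norm v ^ 2 \<le> v \<bullet> u" using pdh[of v] u by simp
      also have "\<dots> \<le> norm v * norm u" by (rule Cauchy_Schwarz_ineq2[THEN order_trans[OF abs_ge_self]])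
      finally have "(l0 / 2) * norm v * norm v \<le> norm v * norm u" by (simp add: power2_eq_square)
      then have "norm v \<le> (2 / l0) * norm u"
        using l0(1) by (cases "norm v = 0") (auto simp: field_simps)
      then show "norm (matrix_inv (m h) *v u) \<le> (2 / l0) * norm u" unfolding v_def .
    qed
  qed
  then show ?thesis using l0(1) by (intro exI[of _ "2 / l0"]) auto
qed

lemma ev_mlip: "\<forall>\<^sub>F h in at 0. norm (m h - m 0) \<le> (norm D + 1) * \<bar>h\<bar>"
proof -
  have "((\<lambda>h. (1/h) *\<^sub>R (m h - m 0)) \<longlongrightarrow> D) (at 0)" by (rule vd_quot[OF md])
  then have "((\<lambda>h. norm ((1/h) *\<^sub>R (m h - m 0))) \<longlongrightarrow> norm D) (at 0)" by (rule tendsto_norm)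
  moreover have "norm D < norm D + 1" by simp
  ultimately have "\<forall>\<^sub>F h in at 0. norm ((1/h) *\<^sub>R (m h - m 0)) < norm D + 1" by (rule order_tendstoD)
  moreover have "\<forall>\<^sub>F h in at (0::real). h \<noteq> 0" by (simp add: eventually_at_filter)
  ultimately show ?thesis
  proof eventually_elim
    case (elim h)
    then have "norm (m h - m 0) / \<bar>h\<bar> < norm D + 1" by (simp add: divide_inverse mult.commute)
    then show ?case using elim(2) by (simp add: divide_less_eq less_imp_le)
  qed
qed

lemma ev_Qlip: "\<exists>Cq. \<forall>\<^sub>F h in at 0. \<forall>z. norm ((matrix_inv (m h) - matrix_inv (m 0)) *v z) \<le> Cq * \<bar>h\<bar> * norm z"
proof -
  obtain L where L: "L > 0" "\<forall>\<^sub>F h in at 0. \<forall>u. norm (matrix_inv (m h) *v u) \<le> L * norm u" using ev_Qbound by blast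
  define Cq where "Cq = L * (real CARD('n) * real CARD('n)) * (norm D + 1) * (real CARD('n) * real CARD('n)) * norm (matrix_inv (m 0))"
  have "\<forall>\<^sub>F h in at 0. \<forall>z. norm ((matrix_inv (m h) - matrix_inv (m 0)) *v z) \<le> Cq * \<bar>h\<bar> * norm z"
    using L(2) ev_mlip
  proof eventually_elim
    case (elim h)
    show ?case
    proof
      fix z
      have "norm ((matrix_inv (m h) - matrix_inv (m 0)) *v z) \<le> L * norm ((m 0 - m h) *v (matrix_inv (m 0) *v z))"
        unfolding Qdiff using elim(1) by blast
      also have "norm ((m 0 - m h) *v (matrix_inv (m 0) *v z)) \<le> (real CARD('n) * real CARD('n)) * norm (m 0 - m h) * norm (matrix_inv (m 0) *v z)"
        using mv_norm_bound[of "m 0 - m h" "matrix_inv (m 0) *v z"] by simp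
      also have "\<dots> \<le> (real CARD('n) * real CARD('n)) * ((norm D + 1) * \<bar>h\<bar>) * ((real CARD('n) * real CARD('n)) * norm (matrix_inv (m 0)) * norm z)"
        using elim(2) mv_norm_bound[of "matrix_inv (m 0)" z]
        by (intro mult_mono mult_left_mono) (auto simp: norm_minus_commute)
      finally show "norm ((matrix_inv (m h) - matrix_inv (m 0)) *v z) \<le> Cq * \<bar>h\<bar> * norm z"
        using L(1) by (simp add: Cq_def mult_left_mono ac_simps)
    qed
  qed
  then show ?thesis by blast
qed

end

context qcurve begin

lemma Qc_tendsto: "((\<lambda>h. matrix_inv (m h) *v a) \<longlongrightarrow> matrix_inv (m 0) *v a) (at 0)"
proof -
  obtain Cq where Cq: "\<forall>\<^sub>F h in at 0. \<forall>z. norm ((matrix_inv (m h) - matrix_inv (m 0)) *v z) \<le> Cq * \<bar>h\<bar> * norm z"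
    using ev_Qlip by blast
  have "((\<lambda>h. (matrix_inv (m h) - matrix_inv (m 0)) *v a) \<longlongrightarrow> 0) (at 0)"
  proof (rule Lim_null_comparison[where g="\<lambda>h. Cq * \<bar>h\<bar> * norm a"])
    show "\<forall>\<^sub>F h in at 0. norm ((matrix_inv (m h) - matrix_inv (m 0)) *v a) \<le> Cq * \<bar>h\<bar> * norm a"
      using Cq by eventually_elim blast
    show "((\<lambda>h. Cq * \<bar>h\<bar> * norm a) \<longlongrightarrow> 0) (at (0::real))"
      by (auto intro!: tendsto_eq_intros)
  qed
  then show ?thesis by (simp add: matrix_vector_mult_diff_rdistrib LIM_zero_iff)
qed

lemma lin_deriv:
  "((\<lambda>h. a \<bullet> (matrix_inv (m h) *v z)) has_real_derivative
     - ((matrix_inv (m 0) *v a) \<bullet> (D *v (matrix_inv (m 0) *v z)))) (at 0)"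
  unfolding has_field_derivative_iff
proof -
  define w where "w = matrix_inv (m 0) *v z"
  have t2: "((\<lambda>h. (1/h) *\<^sub>R (m h *v w - m 0 *v w)) \<longlongrightarrow> D *v w) (at 0)"
    using vd_quot[OF bounded_linear.has_vector_derivative[OF bl_mv md, of w]] by simp
  have t: "((\<lambda>h. (matrix_inv (m h) *v a) \<bullet> (- ((1/h) *\<^sub>R (m h *v w - m 0 *v w))))
      \<longlongrightarrow> (matrix_inv (m 0) *v a) \<bullet> (- (D *v w))) (at 0)"
    by (intro tendsto_inner Qc_tendsto tendsto_minus t2)
  have "\<forall>\<^sub>F h in at (0::real). h \<noteq> 0" by (simp add: eventually_at_filter)
  then have "\<forall>\<^sub>F h in at 0. (matrix_inv (m h) *v a) \<bullet> (- ((1/h) *\<^sub>R (m h *v w - m 0 *v w)))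
      = (a \<bullet> (matrix_inv (m h) *v z) - a \<bullet> (matrix_inv (m 0) *v z)) / (h - 0)"
  proof eventually_elim
    case (elim h)
    have "a \<bullet> (matrix_inv (m h) *v z) - a \<bullet> (matrix_inv (m 0) *v z)
        = a \<bullet> ((matrix_inv (m h) - matrix_inv (m 0)) *v z)"
      by (simp add: matrix_vector_mult_diff_rdistrib inner_diff_right)
    also have "\<dots> = a \<bullet> (matrix_inv (m h) *v ((m 0 - m h) *v w))" unfolding Qdiff w_def ..
    also have "\<dots> = ((m 0 - m h) *v w) \<bullet> (matrix_inv (m h) *v a)" by (rule sym_inner[OF Qsym])
    finally have E: "a \<bullet> (matrix_inv (m h) *v z) - a \<bullet> (matrix_inv (m 0) *v z)
        = ((m 0 - m h) *v w) \<bullet> (matrix_inv (m h) *v a)" .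
    show ?case unfolding E using elim
      by (simp add: inner_commute matrix_vector_mult_diff_rdistrib inner_diff_right inner_diff_left
          divide_inverse algebra_simps)
  qed
  from tendsto_cong[OF this] t
  show "((\<lambda>y. (a \<bullet> (matrix_inv (m y) *v z) - a \<bullet> (matrix_inv (m 0) *v z)) / (y - 0))
      \<longlongrightarrow> - ((matrix_inv (m 0) *v a) \<bullet> (D *v (matrix_inv (m 0) *v z)))) (at 0)"
    unfolding w_def by simp
qed

lemma dEEc:
  "((\<lambda>h. EE (matrix_inv (m h)) z) has_real_derivative
     ((matrix_inv (m 0) *v z) \<bullet> (D *v (matrix_inv (m 0) *v z))) / 2 * EE (matrix_inv (m 0)) z) (at 0)"
proof -
  let ?q = "(matrix_inv (m 0) *v z) \<bullet> (D *v (matrix_inv (m 0) *v z))"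
  have g: "((\<lambda>h. - (z \<bullet> (matrix_inv (m h) *v z)) / 2) has_real_derivative (- (- ?q)) / 2) (at 0)"
    by (intro DERIV_cdivide DERIV_minus lin_deriv)
  have "((\<lambda>h. exp (- (z \<bullet> (matrix_inv (m h) *v z)) / 2)) has_real_derivative
      exp (- (z \<bullet> (matrix_inv (m 0) *v z)) / 2) * ((- (- ?q)) / 2)) (at 0)"
    by (rule DERIV_chain2[OF DERIV_exp g])
  then show ?thesis unfolding EE_def by (simp add: mult.commute)
qed

lemma dK1c:
  "((\<lambda>h. K1 (matrix_inv (m h)) a z) has_real_derivative
     - ((matrix_inv (m 0) *v a) \<bullet> (D *v (matrix_inv (m 0) *v z))) * EE (matrix_inv (m 0)) z
     + (a \<bullet> (matrix_inv (m 0) *v z)) * (((matrix_inv (m 0) *v z) \<bullet> (D *v (matrix_inv (m 0) *v z))) / 2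
         * EE (matrix_inv (m 0)) z)) (at 0)"
proof -
  have "((\<lambda>h. (a \<bullet> (matrix_inv (m h) *v z)) * EE (matrix_inv (m h)) z) has_real_derivative
     - ((matrix_inv (m 0) *v a) \<bullet> (D *v (matrix_inv (m 0) *v z))) * EE (matrix_inv (m 0)) z
     + (((matrix_inv (m 0) *v z) \<bullet> (D *v (matrix_inv (m 0) *v z))) / 2 * EE (matrix_inv (m 0)) z)
       * (a \<bullet> (matrix_inv (m 0) *v z))) (at 0)"
    by (rule DERIV_mult[OF lin_deriv dEEc])
  then show ?thesis unfolding K1_def by (simp add: mult.commute)
qed

end

context qcurve begin

lemma curve_ctrl: "\<exists>\<delta>>0. \<exists>Cp>0. \<exists>l>0. pdb (matrix_inv (m 0)) l \<and> (\<forall>h. \<bar>h\<bar> < \<delta> \<longrightarrow>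
   (\<forall>z. norm ((matrix_inv (m h) - matrix_inv (m 0)) *v z) \<le> Cp * \<bar>h\<bar> * norm z) \<and> pdb (matrix_inv (m h)) l)"
proof -
  obtain l0 where l0: "l0 > 0" "\<And>z. l0 * norm z ^ 2 \<le> z \<bullet> (matrix_inv (m 0) *v z)"
    using inv_pd_bound[OF mpd[of 0]] by blast
  obtain Cq where Cq: "\<forall>\<^sub>F h in at 0. \<forall>z. norm ((matrix_inv (m h) - matrix_inv (m 0)) *v z) \<le> Cq * \<bar>h\<bar> * norm z"
    using ev_Qlip by blast
  define Cp where "Cp = \<bar>Cq\<bar> + 1"
  have Cp: "Cp > 0" unfolding Cp_def by simp
  obtain d where d: "d > 0" "\<And>h. h \<noteq> 0 \<Longrightarrow> dist h 0 < d \<Longrightarrow>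
      \<forall>z. norm ((matrix_inv (m h) - matrix_inv (m 0)) *v z) \<le> Cq * \<bar>h\<bar> * norm z"
    using Cq unfolding eventually_at by auto
  define \<delta> where "\<delta> = min d (l0 / (2 * Cp))"
  have \<delta>: "\<delta> > 0" unfolding \<delta>_def using d l0 Cp by simp
  have lip: "norm ((matrix_inv (m h) - matrix_inv (m 0)) *v z) \<le> Cp * \<bar>h\<bar> * norm z" if h: "\<bar>h\<bar> < \<delta>" for h z
  proof (cases "h = 0")
    case True then show ?thesis by simp
  next
    case False
    then have "norm ((matrix_inv (m h) - matrix_inv (m 0)) *v z) \<le> Cq * \<bar>h\<bar> * norm z"
      using d(2)[of h] h by (auto simp: \<delta>_def dist_real_def)
    also have "\<dots> \<le> Cp * \<bar>h\<bar> * norm z" unfolding Cp_def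
      by (intro mult_right_mono) auto
    finally show ?thesis .
  qed
  have pdh: "pdb (matrix_inv (m h)) (l0 / 2)" if h: "\<bar>h\<bar> < \<delta>" for h
    unfolding pdb_def
  proof (intro conjI allI)
    show "l0 / 2 > 0" using l0 by simp
    fix z
    have "\<bar>z \<bullet> ((matrix_inv (m h) - matrix_inv (m 0)) *v z)\<bar> \<le> norm z * (Cp * \<bar>h\<bar> * norm z)"
      using Cauchy_Schwarz_ineq2 lip[OF h, of z] by (meson mult_left_mono norm_ge_zero order_trans)
    also have "\<dots> \<le> norm z * ((l0 / 2) * norm z)"
    proof -
      have "Cp * \<bar>h\<bar> \<le> Cp * (l0 / (2 * Cp))" using h Cp by (intro mult_left_mono) (auto simp: \<delta>_def)
      then have "Cp * \<bar>h\<bar> \<le> l0 / 2" using Cp by simp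
      then show ?thesis by (intro mult_left_mono mult_right_mono) auto
    qed
    finally have "\<bar>z \<bullet> ((matrix_inv (m h) - matrix_inv (m 0)) *v z)\<bar> \<le> (l0 / 2) * norm z ^ 2"
      by (simp add: power2_eq_square ac_simps)
    moreover have "z \<bullet> (matrix_inv (m h) *v z) = z \<bullet> (matrix_inv (m 0) *v z) + z \<bullet> ((matrix_inv (m h) - matrix_inv (m 0)) *v z)"
      by (simp add: matrix_vector_mult_diff_rdistrib inner_diff_right)
    ultimately show "l0 / 2 * norm z ^ 2 \<le> z \<bullet> (matrix_inv (m h) *v z)" using l0(2)[of z] by linarith
  qed
  have "pdb (matrix_inv (m 0)) (l0 / 2)" using pdh[of 0] \<delta> by simp
  then show ?thesis
    apply (rule_tac exI[of _ \<delta>])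
    apply (rule conjI[OF \<delta>])
    apply (rule exI[of _ Cp])
    apply (rule conjI[OF Cp])
    apply (rule exI[of _ "l0/2"])
    using lip pdh l0(1) by auto
qed

lemma EE_le1:
  assumes "pdb Q l" shows "EE Q z \<le> 1"
proof -
  have "l > 0" using assms unfolding pdb_def by simp
  then have "- l * norm z ^ 2 / 2 \<le> 0" by simp
  then have "exp (- l * norm z ^ 2 / 2) \<le> 1" by simp
  then show ?thesis using EE_bound[OF assms, of z] by linarith
qed

lemma EE_lip:
  assumes "pdb Q1 l" "pdb Q0 l"
  shows "\<bar>EE Q1 z - EE Q0 z\<bar> \<le> \<bar>z \<bullet> ((Q1 - Q0) *v z)\<bar> / 2 * exp (- l * norm z ^ 2 / 2)"
proof -
  have a: "z \<bullet> (Q1 *v z) / 2 \<ge> l * norm z ^ 2 / 2" "z \<bullet> (Q0 *v z) / 2 \<ge> l * norm z ^ 2 / 2"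
    using assms unfolding pdb_def by (auto simp: divide_right_mono)
  have "\<bar>exp (- (z \<bullet> (Q1 *v z) / 2)) - exp (- (z \<bullet> (Q0 *v z) / 2))\<bar>
      \<le> \<bar>z \<bullet> (Q1 *v z) / 2 - z \<bullet> (Q0 *v z) / 2\<bar> * exp (- (l * norm z ^ 2 / 2))"
    by (rule exp_lip[OF a])
  moreover have "z \<bullet> (Q1 *v z) / 2 - z \<bullet> (Q0 *v z) / 2 = z \<bullet> ((Q1 - Q0) *v z) / 2"
    by (simp add: matrix_vector_mult_diff_rdistrib inner_diff_right diff_divide_distrib)
  ultimately show ?thesis unfolding EE_def by (simp add: abs_divide)
qed

end

lemma continuous_on_mv[continuous_intros]:
  fixes A :: "real^'n^'m"
  shows "continuous_on S f \<Longrightarrow> continuous_on S (\<lambda>x. A *v f x)"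
  by (rule continuous_on_compose2[OF linear_continuous_on[OF matrix_vector_mul_bounded_linear]]) auto

context qcurve begin

lemma DJ0c:
  assumes P: "prob_space \<mu>" and Ps: "sets \<mu> = sets borel"
  shows "((\<lambda>h. J0 \<mu> (matrix_inv (m h)) x) has_real_derivative
    (\<integral>y. ((matrix_inv (m 0) *v (x - y)) \<bullet> (D *v (matrix_inv (m 0) *v (x - y)))) / 2
        * EE (matrix_inv (m 0)) (x - y) \<partial>\<mu>)) (at 0)"
proof -
  obtain \<delta> Cp l where \<delta>: "\<delta> > 0" and Cp: "Cp > 0" and l: "l > 0" and pd0: "pdb (matrix_inv (m 0)) l"
    and lip: "\<And>h z. \<bar>h\<bar> < \<delta> \<Longrightarrow> norm ((matrix_inv (m h) - matrix_inv (m 0)) *v z) \<le> Cp * \<bar>h\<bar> * norm z"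
    and pdh: "\<And>h. \<bar>h\<bar> < \<delta> \<Longrightarrow> pdb (matrix_inv (m h)) l"
    using curve_ctrl by blast
  obtain B2 where B2: "\<And>z::real^'n. norm z ^ 2 * exp (- l * norm z ^ 2 / 2) \<le> B2"
    using poly_exp_bound[OF l, of 2] by blast
  interpret prob_space \<mu> by (rule P)
  show ?thesis unfolding J0_def
  proof (rule deriv_integral_dct[where C=1 and \<delta>=\<delta> and B="Cp * B2 / 2"])
    show "finite_measure \<mu>" by unfold_locales
    show "(\<lambda>y. EE (matrix_inv (m h)) (x - y)) \<in> borel_measurable \<mu>" for h
      by (rule cont_meas[OF Ps cont_shift[OF EE_cont]])
    show "\<bar>EE (matrix_inv (m h)) (x - y)\<bar> \<le> 1" if "\<bar>h\<bar> < \<delta>" for h y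
      using EE_le1[OF pdh[OF that], of "x - y"] EE_pos[of "matrix_inv (m h)" "x - y"] by simp
    show "((\<lambda>h. EE (matrix_inv (m h)) (x - y)) has_real_derivative
       ((matrix_inv (m 0) *v (x - y)) \<bullet> (D *v (matrix_inv (m 0) *v (x - y)))) / 2
        * EE (matrix_inv (m 0)) (x - y)) (at 0)" for y
      by (rule dEEc)
    show "(\<lambda>y. ((matrix_inv (m 0) *v (x - y)) \<bullet> (D *v (matrix_inv (m 0) *v (x - y)))) / 2
        * EE (matrix_inv (m 0)) (x - y)) \<in> borel_measurable \<mu>"
      by (rule cont_meas[OF Ps cont_shift]) (auto intro!: continuous_intros simp: EE_def)
    show "0 < \<delta>" by (rule \<delta>)
    show "\<bar>EE (matrix_inv (m h)) (x - y) - EE (matrix_inv (m 0)) (x - y)\<bar> \<le> Cp * B2 / 2 * \<bar>h\<bar>"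
      if h: "\<bar>h\<bar> < \<delta>" for h y
    proof -
      let ?z = "x - y"
      have "\<bar>EE (matrix_inv (m h)) ?z - EE (matrix_inv (m 0)) ?z\<bar>
          \<le> \<bar>?z \<bullet> ((matrix_inv (m h) - matrix_inv (m 0)) *v ?z)\<bar> / 2 * exp (- l * norm ?z ^ 2 / 2)"
        by (rule EE_lip[OF pdh[OF h] pd0])
      also have "\<bar>?z \<bullet> ((matrix_inv (m h) - matrix_inv (m 0)) *v ?z)\<bar> \<le> norm ?z * (Cp * \<bar>h\<bar> * norm ?z)"
        using Cauchy_Schwarz_ineq2 lip[OF h, of ?z] by (meson mult_left_mono norm_ge_zero order_trans)
      then have "\<bar>?z \<bullet> ((matrix_inv (m h) - matrix_inv (m 0)) *v ?z)\<bar> / 2 * exp (- l * norm ?z ^ 2 / 2)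
          \<le> (norm ?z * (Cp * \<bar>h\<bar> * norm ?z)) / 2 * exp (- l * norm ?z ^ 2 / 2)"
        by (intro mult_right_mono divide_right_mono) auto
      also have "\<dots> = Cp * \<bar>h\<bar> / 2 * (norm ?z ^ 2 * exp (- l * norm ?z ^ 2 / 2))"
        by (simp add: power2_eq_square)
      also have "\<dots> \<le> Cp * \<bar>h\<bar> / 2 * B2" using Cp by (intro mult_left_mono B2) auto
      finally show ?thesis by (simp add: ac_simps)
    qed
  qed
qed

lemma DJ1c:
  assumes P: "prob_space \<mu>" and Ps: "sets \<mu> = sets borel"
  shows "((\<lambda>h. J1 \<mu> (matrix_inv (m h)) a x) has_real_derivative
    (\<integral>y. - ((matrix_inv (m 0) *v a) \<bullet> (D *v (matrix_inv (m 0) *v (x - y)))) * EE (matrix_inv (m 0)) (x - y)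
     + (a \<bullet> (matrix_inv (m 0) *v (x - y))) * (((matrix_inv (m 0) *v (x - y)) \<bullet> (D *v (matrix_inv (m 0) *v (x - y)))) / 2
         * EE (matrix_inv (m 0)) (x - y)) \<partial>\<mu>)) (at 0)"
proof -
  obtain \<delta> Cp l where \<delta>: "\<delta> > 0" and Cp: "Cp > 0" and l: "l > 0" and pd0: "pdb (matrix_inv (m 0)) l"
    and lip: "\<And>h z. \<bar>h\<bar> < \<delta> \<Longrightarrow> norm ((matrix_inv (m h) - matrix_inv (m 0)) *v z) \<le> Cp * \<bar>h\<bar> * norm z"
    and pdh: "\<And>h. \<bar>h\<bar> < \<delta> \<Longrightarrow> pdb (matrix_inv (m h)) l"
    using curve_ctrl by blast
  obtain B1 where B1: "\<And>z::real^'n. norm z ^ 1 * exp (- l * norm z ^ 2 / 2) \<le> B1"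
    using poly_exp_bound[OF l, of 1] by blast
  obtain B3 where B3: "\<And>z::real^'n. norm z ^ 3 * exp (- l * norm z ^ 2 / 2) \<le> B3"
    using poly_exp_bound[OF l, of 3] by blast
  define R where "R = real CARD('n) * real CARD('n) * norm (matrix_inv (m 0))"
  have R: "R \<ge> 0" unfolding R_def by simp
  have Q0b: "norm (matrix_inv (m 0) *v z) \<le> R * norm z" for z
    using mv_norm_bound[of "matrix_inv (m 0)" z] unfolding R_def by simp
  have Qhb: "norm (matrix_inv (m h) *v z) \<le> (R + Cp * \<delta>) * norm z" if h: "\<bar>h\<bar> < \<delta>" for h z
  proof -
    have "matrix_inv (m h) *v z = matrix_inv (m 0) *v z + (matrix_inv (m h) - matrix_inv (m 0)) *v z"
      by (simp add: matrix_vector_mult_diff_rdistrib)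
    then have "norm (matrix_inv (m h) *v z) \<le> norm (matrix_inv (m 0) *v z) + norm ((matrix_inv (m h) - matrix_inv (m 0)) *v z)"
      by (metis norm_triangle_ineq)
    also have "\<dots> \<le> R * norm z + Cp * \<delta> * norm z"
    proof -
      have "Cp * \<bar>h\<bar> * norm z \<le> Cp * \<delta> * norm z"
        using h Cp by (intro mult_right_mono mult_left_mono) auto
      then show ?thesis using Q0b[of z] lip[OF h, of z] by linarith
    qed
    finally show ?thesis by (simp add: algebra_simps)
  qed
  have EEb: "EE Q z \<le> exp (- l * norm z ^ 2 / 2)" if "pdb Q l" for Q z
    by (rule EE_bound[OF that])
  interpret prob_space \<mu> by (rule P)
  show ?thesis unfolding J1_def
  proof (rule deriv_integral_dct[where C="norm a * (R + Cp * \<delta>) * B1" and \<delta>=\<delta>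
        and B="norm a * Cp * B1 + norm a * R * Cp * B3 / 2"])
    show "finite_measure \<mu>" by unfold_locales
    show "(\<lambda>y. K1 (matrix_inv (m h)) a (x - y)) \<in> borel_measurable \<mu>" for h
      by (rule cont_meas[OF Ps cont_shift[OF K1_cont]])
    show "\<bar>K1 (matrix_inv (m h)) a (x - y)\<bar> \<le> norm a * (R + Cp * \<delta>) * B1" if h: "\<bar>h\<bar> < \<delta>" for h y
    proof -
      let ?z = "x - y"
      have "\<bar>K1 (matrix_inv (m h)) a ?z\<bar> = \<bar>a \<bullet> (matrix_inv (m h) *v ?z)\<bar> * EE (matrix_inv (m h)) ?z"
        unfolding K1_def using EE_pos[of "matrix_inv (m h)" ?z] by (simp add: abs_mult)
      also have "\<dots> \<le> (norm a * ((R + Cp * \<delta>) * norm ?z)) * exp (- l * norm ?z ^ 2 / 2)"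
      proof (rule mult_mono)
        show "\<bar>a \<bullet> (matrix_inv (m h) *v ?z)\<bar> \<le> norm a * ((R + Cp * \<delta>) * norm ?z)"
          using Cauchy_Schwarz_ineq2[of a "matrix_inv (m h) *v ?z"] Qhb[OF h, of ?z]
          by (meson mult_left_mono norm_ge_zero order_trans)
        show "EE (matrix_inv (m h)) ?z \<le> exp (- l * norm ?z ^ 2 / 2)" by (rule EEb[OF pdh[OF h]])
        show "0 \<le> norm a * ((R + Cp * \<delta>) * norm ?z)" using R Cp \<delta> by simp
        show "0 \<le> EE (matrix_inv (m h)) ?z" using EE_pos less_imp_le by blast
      qed
      also have "\<dots> = norm a * (R + Cp * \<delta>) * (norm ?z ^ 1 * exp (- l * norm ?z ^ 2 / 2))" by simp
      also have "\<dots> \<le> norm a * (R + Cp * \<delta>) * B1"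
        using R Cp \<delta> by (intro mult_left_mono B1) auto
      finally show ?thesis .
    qed
    show "((\<lambda>h. K1 (matrix_inv (m h)) a (x - y)) has_real_derivative
       - ((matrix_inv (m 0) *v a) \<bullet> (D *v (matrix_inv (m 0) *v (x - y)))) * EE (matrix_inv (m 0)) (x - y)
     + (a \<bullet> (matrix_inv (m 0) *v (x - y))) * (((matrix_inv (m 0) *v (x - y)) \<bullet> (D *v (matrix_inv (m 0) *v (x - y)))) / 2
         * EE (matrix_inv (m 0)) (x - y))) (at 0)" for y
      by (rule dK1c)
    show "(\<lambda>y. - ((matrix_inv (m 0) *v a) \<bullet> (D *v (matrix_inv (m 0) *v (x - y)))) * EE (matrix_inv (m 0)) (x - y)
     + (a \<bullet> (matrix_inv (m 0) *v (x - y))) * (((matrix_inv (m 0) *v (x - y)) \<bullet> (D *v (matrix_inv (m 0) *v (x - y)))) / 2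
         * EE (matrix_inv (m 0)) (x - y))) \<in> borel_measurable \<mu>"
      by (rule cont_meas[OF Ps cont_shift]) (auto intro!: continuous_intros simp: EE_def)
    show "0 < \<delta>" by (rule \<delta>)
    show "\<bar>K1 (matrix_inv (m h)) a (x - y) - K1 (matrix_inv (m 0)) a (x - y)\<bar>
        \<le> (norm a * Cp * B1 + norm a * R * Cp * B3 / 2) * \<bar>h\<bar>"
      if h: "\<bar>h\<bar> < \<delta>" for h y
    proof -
      let ?z = "x - y"
      let ?e = "exp (- l * norm ?z ^ 2 / 2)"
      let ?Eh = "EE (matrix_inv (m h)) ?z" and ?E0 = "EE (matrix_inv (m 0)) ?z"
      have split: "K1 (matrix_inv (m h)) a ?z - K1 (matrix_inv (m 0)) a ?z
          = (a \<bullet> ((matrix_inv (m h) - matrix_inv (m 0)) *v ?z)) * ?Eh + (a \<bullet> (matrix_inv (m 0) *v ?z)) * (?Eh - ?E0)"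
        unfolding K1_def by (simp add: matrix_vector_mult_diff_rdistrib inner_diff_right algebra_simps)
      have t1: "\<bar>(a \<bullet> ((matrix_inv (m h) - matrix_inv (m 0)) *v ?z)) * ?Eh\<bar> \<le> (norm a * (Cp * \<bar>h\<bar> * norm ?z)) * ?e"
        unfolding abs_mult
      proof (rule mult_mono)
        show "\<bar>a \<bullet> ((matrix_inv (m h) - matrix_inv (m 0)) *v ?z)\<bar> \<le> norm a * (Cp * \<bar>h\<bar> * norm ?z)"
          using Cauchy_Schwarz_ineq2[of a "(matrix_inv (m h) - matrix_inv (m 0)) *v ?z"] lip[OF h, of ?z]
          by (meson mult_left_mono norm_ge_zero order_trans)
        show "\<bar>?Eh\<bar> \<le> ?e" using EEb[OF pdh[OF h], of ?z] EE_pos[of "matrix_inv (m h)" ?z] by simp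
        show "0 \<le> norm a * (Cp * \<bar>h\<bar> * norm ?z)" using Cp by simp
      qed simp
      have dE: "\<bar>?Eh - ?E0\<bar> \<le> (norm ?z * (Cp * \<bar>h\<bar> * norm ?z)) / 2 * ?e"
      proof -
        have "\<bar>?Eh - ?E0\<bar> \<le> \<bar>?z \<bullet> ((matrix_inv (m h) - matrix_inv (m 0)) *v ?z)\<bar> / 2 * ?e"
          by (rule EE_lip[OF pdh[OF h] pd0])
        also have "\<bar>?z \<bullet> ((matrix_inv (m h) - matrix_inv (m 0)) *v ?z)\<bar> \<le> norm ?z * (Cp * \<bar>h\<bar> * norm ?z)"
          using Cauchy_Schwarz_ineq2 lip[OF h, of ?z] by (meson mult_left_mono norm_ge_zero order_trans)
        then have "\<bar>?z \<bullet> ((matrix_inv (m h) - matrix_inv (m 0)) *v ?z)\<bar> / 2 * ?e \<le> (norm ?z * (Cp * \<bar>h\<bar> * norm ?z)) / 2 * ?e"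
          by (intro mult_right_mono divide_right_mono) auto
        finally show ?thesis .
      qed
      have t2: "\<bar>(a \<bullet> (matrix_inv (m 0) *v ?z)) * (?Eh - ?E0)\<bar> \<le> (norm a * (R * norm ?z)) * ((norm ?z * (Cp * \<bar>h\<bar> * norm ?z)) / 2 * ?e)"
        unfolding abs_mult
      proof (rule mult_mono)
        show "\<bar>a \<bullet> (matrix_inv (m 0) *v ?z)\<bar> \<le> norm a * (R * norm ?z)"
          using Cauchy_Schwarz_ineq2[of a "matrix_inv (m 0) *v ?z"] Q0b[of ?z]
          by (meson mult_left_mono norm_ge_zero order_trans)
        show "0 \<le> norm a * (R * norm ?z)" using R by simp
      qed (use dE in auto)
      have "\<bar>K1 (matrix_inv (m h)) a ?z - K1 (matrix_inv (m 0)) a ?z\<bar>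
          \<le> (norm a * (Cp * \<bar>h\<bar> * norm ?z)) * ?e + (norm a * (R * norm ?z)) * ((norm ?z * (Cp * \<bar>h\<bar> * norm ?z)) / 2 * ?e)"
        unfolding split using t1 t2 by (smt (verit) abs_triangle_ineq)
      also have "\<dots> = \<bar>h\<bar> * (norm a * Cp * (norm ?z ^ 1 * ?e) + norm a * R * Cp / 2 * (norm ?z ^ 3 * ?e))"
        by (simp add: power3_eq_cube algebra_simps)
      also have "\<dots> \<le> \<bar>h\<bar> * (norm a * Cp * B1 + norm a * R * Cp / 2 * B3)"
        using Cp R by (intro mult_left_mono add_mono B1 B3) auto
      finally show ?thesis by (simp add: ac_simps)
    qed
  qed
qed

end

lemma mv_cols: "(D::real^'n^'n) *v u = (\<Sum>i\<in>UNIV. u $ i *\<^sub>R (D *v axis i 1))"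
  by (simp add: vec_eq_iff matrix_vector_mult_def axis_def if_distrib cong: if_cong)
     (simp add: mult.commute)

lemma vec_expand: "(u::real^'n) = (\<Sum>i\<in>UNIV. u $ i *\<^sub>R axis i 1)"
  by (simp add: vec_eq_iff axis_def if_distrib cong: if_cong)

lemma axis_inner: "axis i 1 \<bullet> (w::real^'n) = w $ i"
  by (simp add: inner_axis')

lemma inner_expand: "(b::real^'n) \<bullet> w = (\<Sum>i\<in>UNIV. b $ i * (axis i 1 \<bullet> w))"
  unfolding axis_inner by (simp add: inner_vec_def)

lemma quad_sum: "u \<bullet> ((D::real^'n^'n) *v u) = (\<Sum>i\<in>UNIV. (axis i 1 \<bullet> u) * ((D *v axis i 1) \<bullet> u))"
proof -
  have "u \<bullet> (D *v u) = u \<bullet> (\<Sum>i\<in>UNIV. u $ i *\<^sub>R (D *v axis i 1))" by (subst mv_cols) simp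
  also have "\<dots> = (\<Sum>i\<in>UNIV. u $ i * (u \<bullet> (D *v axis i 1)))" by (simp add: inner_sum_right)
  finally show ?thesis by (simp add: axis_inner inner_axis inner_commute)
qed

context gsetup begin

lemma J1_lin: "J1 \<mu> Q b x = (\<Sum>i\<in>UNIV. b $ i * J1 \<mu> Q (axis i 1) x)"
proof -
  have "K1 Q b z = (\<Sum>i\<in>UNIV. b $ i * K1 Q (axis i 1) z)" for z
    unfolding K1_def by (subst inner_expand) (simp add: sum_distrib_right mult.assoc)
  then have "J1 \<mu> Q b x = (\<integral>y. (\<Sum>i\<in>UNIV. b $ i * K1 Q (axis i 1) (x - y)) \<partial>\<mu>)"
    unfolding J1_def by simp
  also have "\<dots> = (\<Sum>i\<in>UNIV. b $ i * J1 \<mu> Q (axis i 1) x)"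
    unfolding J1_def by (subst Bochner_Integration.integral_sum) (auto intro: intK1)
  finally show ?thesis .
qed

definition "Avec x = (\<chi> i. J1 \<mu> Q (axis i 1) x)"

lemma J1_inner: "J1 \<mu> Q b x = b \<bullet> Avec x"
  unfolding J1_lin[of b] Avec_def by (simp add: inner_vec_def)

lemma J2_lin: "J2 \<mu> Q a (\<Sum>i\<in>UNIV. c i *\<^sub>R b i) x = (\<Sum>i\<in>UNIV. c i * J2 \<mu> Q a (b i) x)"
proof -
  have "K2 Q a (\<Sum>i\<in>UNIV. c i *\<^sub>R b i) z = (\<Sum>i\<in>UNIV. c i * K2 Q a (b i) z)" for z
    unfolding K2_def by (simp add: inner_sum_left sum_distrib_left sum_distrib_right ac_simps)
  then have "J2 \<mu> Q a (\<Sum>i\<in>UNIV. c i *\<^sub>R b i) x = (\<integral>y. (\<Sum>i\<in>UNIV. c i * K2 Q a (b i) (x - y)) \<partial>\<mu>)"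
    unfolding J2_def by simp
  also have "\<dots> = (\<Sum>i\<in>UNIV. c i * J2 \<mu> Q a (b i) x)"
    unfolding J2_def by (subst Bochner_Integration.integral_sum) (auto intro: intK2)
  finally show ?thesis .
qed

lemma J2_scale: "J2 \<mu> Q a (c *\<^sub>R b) x = c * J2 \<mu> Q a b x"
  unfolding J2_def K2_def by (simp add: ac_simps)

lemma J2_sym: "J2 \<mu> Q a b x = J2 \<mu> Q b a x"
  unfolding J2_def K2_def by (simp add: ac_simps)

lemma J3_sym: "J3 \<mu> Q a b c x = J3 \<mu> Q a c b x"
  unfolding J3_def K3_def by (simp add: ac_simps)

lemma curve_int0:
  "(\<integral>y. ((Q *v (x - y)) \<bullet> (D *v (Q *v (x - y)))) / 2 * EE Q (x - y) \<partial>\<mu>)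
    = (\<Sum>i\<in>UNIV. J2 \<mu> Q (axis i 1) (D *v axis i 1) x) / 2"
proof -
  have "((Q *v z) \<bullet> (D *v (Q *v z))) / 2 * EE Q z = (\<Sum>i\<in>UNIV. K2 Q (axis i 1) (D *v axis i 1) z) / 2" for z
    unfolding K2_def quad_sum[of "Q *v z" D] by (simp add: sum_distrib_right inner_commute)
  then have "(\<integral>y. ((Q *v (x - y)) \<bullet> (D *v (Q *v (x - y)))) / 2 * EE Q (x - y) \<partial>\<mu>)
      = (\<integral>y. (\<Sum>i\<in>UNIV. K2 Q (axis i 1) (D *v axis i 1) (x - y)) / 2 \<partial>\<mu>)" by simp
  also have "\<dots> = (\<Sum>i\<in>UNIV. J2 \<mu> Q (axis i 1) (D *v axis i 1) x) / 2"
    unfolding J2_def by (subst Bochner_Integration.integral_divide_zero, subst Bochner_Integration.integral_sum) (auto intro: intK2)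
  finally show ?thesis .
qed

lemma curve_int1:
  assumes Ds: "transpose D = D"
  shows "(\<integral>y. - ((Q *v a) \<bullet> (D *v (Q *v (x - y)))) * EE Q (x - y)
     + (a \<bullet> (Q *v (x - y))) * (((Q *v (x - y)) \<bullet> (D *v (Q *v (x - y)))) / 2 * EE Q (x - y)) \<partial>\<mu>)
    = - J1 \<mu> Q (D *v (Q *v a)) x + (\<Sum>i\<in>UNIV. J3 \<mu> Q a (axis i 1) (D *v axis i 1) x) / 2"
proof -
  have "- ((Q *v a) \<bullet> (D *v (Q *v z))) * EE Q z
     + (a \<bullet> (Q *v z)) * (((Q *v z) \<bullet> (D *v (Q *v z))) / 2 * EE Q z)
    = - K1 Q (D *v (Q *v a)) z + (\<Sum>i\<in>UNIV. K3 Q a (axis i 1) (D *v axis i 1) z) / 2" for z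
  proof -
    have "(Q *v a) \<bullet> (D *v (Q *v z)) = (Q *v z) \<bullet> (D *v (Q *v a))" by (rule sym_inner[OF Ds])
    then show ?thesis
      unfolding K1_def K3_def quad_sum[of "Q *v z" D]
      by (simp add: sum_distrib_right sum_distrib_left inner_commute ac_simps)
  qed
  then have "(\<integral>y. - ((Q *v a) \<bullet> (D *v (Q *v (x - y)))) * EE Q (x - y)
     + (a \<bullet> (Q *v (x - y))) * (((Q *v (x - y)) \<bullet> (D *v (Q *v (x - y)))) / 2 * EE Q (x - y)) \<partial>\<mu>)
     = (\<integral>y. - K1 Q (D *v (Q *v a)) (x - y) + (\<Sum>i\<in>UNIV. K3 Q a (axis i 1) (D *v axis i 1) (x - y)) / 2 \<partial>\<mu>)"
    by simp
  also have "\<dots> = - J1 \<mu> Q (D *v (Q *v a)) x + (\<Sum>i\<in>UNIV. J3 \<mu> Q a (axis i 1) (D *v axis i 1) x) / 2"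
    unfolding J1_def J3_def
    by (subst Bochner_Integration.integral_add; (subst Bochner_Integration.integral_divide_zero)?; (subst Bochner_Integration.integral_sum)?)
       (auto intro!: intK1 intK3 integrable_sum integrable_divide)
  finally show ?thesis .
qed

end

lemma sum_combo:
  fixes f g1 g2 g3 h :: "'i \<Rightarrow> real"
  shows "(\<Sum>i\<in>I. - f i / n + (g1 i + g2 i + g3 i) / n2 - 2 * h i / n3)
    = - (\<Sum>i\<in>I. f i) / n + ((\<Sum>i\<in>I. g1 i) + (\<Sum>i\<in>I. g2 i) + (\<Sum>i\<in>I. g3 i)) / n2 - 2 * (\<Sum>i\<in>I. h i) / n3"
  by (simp add: divide_inverse sum.distrib sum_subtractf sum_negf sum_distrib_left sum_distrib_right algebra_simps)

context gsetup begin

lemma final_identity: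
  assumes Ds: "transpose D = D"
  shows "(\<chi> k. ((- (- J1 \<mu> Q (D *v (Q *v axis k 1)) x + (\<Sum>i\<in>UNIV. J3 \<mu> Q (axis k 1) (axis i 1) (D *v axis i 1) x) / 2))
             * J0 \<mu> Q x - (- J1 \<mu> Q (axis k 1) x) * ((\<Sum>i\<in>UNIV. J2 \<mu> Q (axis i 1) (D *v axis i 1) x) / 2))
             / (J0 \<mu> Q x * J0 \<mu> Q x))
    = (1/2) *\<^sub>R (\<Sum>i\<in>UNIV. DDsc \<mu> Q x (D *v axis i 1) (axis i 1)) + Dsc \<mu> Q x (D *v sc \<mu> Q x)"
proof (subst vec_eq_iff, intro allI)
  fix k
  let ?e = "\<lambda>i. axis i 1 :: real^'n"
  define n where "n = J0 \<mu> Q x"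
  define A where "A = Avec x"
  have n0: "n \<noteq> 0" unfolding n_def using J0_pos[of x] by simp
  have J1A: "J1 \<mu> Q b x = b \<bullet> A" for b unfolding A_def by (rule J1_inner)
  have Ai: "J1 \<mu> Q (?e i) x = A $ i" for i unfolding J1A by (simp add: axis_inner)
  have DeA: "(D *v ?e i) \<bullet> A = (D *v A) $ i" for i
    using sym_inner[OF Ds, of A "?e i"] by (simp add: inner_commute axis_inner)
  define T where "T = (\<Sum>i\<in>UNIV. J3 \<mu> Q (?e k) (?e i) (D *v ?e i) x)"
  define P where "P = (\<Sum>i\<in>UNIV. J2 \<mu> Q (?e i) (D *v ?e i) x)"
  define G where "G = J2 \<mu> Q (?e k) (D *v A) x"
  define H where "H = (D *v A) \<bullet> A"
  define c where "c = (D *v (Q *v ?e k)) \<bullet> A"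
  have sc_eq: "sc \<mu> Q x = (- 1 / n) *\<^sub>R A"
    unfolding sc_def n_def A_def Avec_def by (simp add: vec_eq_iff)
  have v_eq: "D *v sc \<mu> Q x = (- 1 / n) *\<^sub>R (D *v A)"
  proof -
    have neg: "D *v (- y) = - (D *v y)" for y :: "real^'n"
      by (simp add: vec_eq_iff matrix_vector_mult_def sum_negf)
    show ?thesis unfolding sc_eq by (simp add: matrix_vector_mult_scaleR neg)
  qed
  have F1: "(\<Sum>i\<in>UNIV. J3 \<mu> Q (?e k) (D *v ?e i) (?e i) x) = T"
    unfolding T_def by (intro sum.cong refl J3_sym)
  have F2: "(\<Sum>i\<in>UNIV. J2 \<mu> Q (?e k) (D *v ?e i) x * J1 \<mu> Q (?e i) x) = G"
  proof -
    have "G = J2 \<mu> Q (?e k) (\<Sum>i\<in>UNIV. A $ i *\<^sub>R (D *v ?e i)) x" unfolding G_def by (subst mv_cols) simp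
    also have "\<dots> = (\<Sum>i\<in>UNIV. A $ i * J2 \<mu> Q (?e k) (D *v ?e i) x)" by (rule J2_lin)
    finally show ?thesis by (simp add: Ai mult.commute)
  qed
  have F3: "(\<Sum>i\<in>UNIV. J2 \<mu> Q (?e k) (?e i) x * J1 \<mu> Q (D *v ?e i) x) = G"
  proof -
    have "G = J2 \<mu> Q (?e k) (\<Sum>i\<in>UNIV. (D *v A) $ i *\<^sub>R ?e i) x" unfolding G_def by (subst vec_expand) simp
    also have "\<dots> = (\<Sum>i\<in>UNIV. (D *v A) $ i * J2 \<mu> Q (?e k) (?e i) x)" by (rule J2_lin)
    finally show ?thesis by (simp add: J1A DeA mult.commute)
  qed
  have F4: "(\<Sum>i\<in>UNIV. J1 \<mu> Q (?e k) x * J2 \<mu> Q (D *v ?e i) (?e i) x) = A $ k * P"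
    unfolding P_def Ai by (simp add: sum_distrib_left J2_sym[of "D *v ?e _"])
  have F5: "(\<Sum>i\<in>UNIV. J1 \<mu> Q (?e k) x * J1 \<mu> Q (D *v ?e i) x * J1 \<mu> Q (?e i) x) = A $ k * H"
    unfolding H_def Ai unfolding J1A unfolding DeA by (simp add: sum_distrib_left inner_vec_def ac_simps)
  have cQ: "(?e k) \<bullet> (Q *v (D *v A)) = c"
  proof -
    have "(?e k) \<bullet> (Q *v (D *v A)) = (D *v A) \<bullet> (Q *v ?e k)" by (rule sym_inner[OF sym])
    also have "\<dots> = A \<bullet> (D *v (Q *v ?e k))" by (metis inner_commute sym_inner[OF Ds])
    finally show ?thesis unfolding c_def by (simp add: inner_commute)
  qed
  have DDk: "(\<Sum>i\<in>UNIV. DDsc \<mu> Q x (D *v ?e i) (?e i) $ k)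
      = - T / n + (G + G + A $ k * P) / n^2 - 2 * (A $ k * H) / n^3"
  proof -
    have "(\<Sum>i\<in>UNIV. DDsc \<mu> Q x (D *v ?e i) (?e i) $ k)
      = (\<Sum>i\<in>UNIV. - J3 \<mu> Q (?e k) (D *v ?e i) (?e i) x / n
          + (J2 \<mu> Q (?e k) (D *v ?e i) x * J1 \<mu> Q (?e i) x + J2 \<mu> Q (?e k) (?e i) x * J1 \<mu> Q (D *v ?e i) x
             + J1 \<mu> Q (?e k) x * J2 \<mu> Q (D *v ?e i) (?e i) x) / n^2
          - 2 * (J1 \<mu> Q (?e k) x * J1 \<mu> Q (D *v ?e i) x * J1 \<mu> Q (?e i) x) / n^3)"
      unfolding DDsc_def n_def by (simp add: mult.assoc)
    also have "\<dots> = - T / n + (G + G + A $ k * P) / n^2 - 2 * (A $ k * H) / n^3"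
      unfolding sum_combo F1 F2 F3 F4 F5 ..
    finally show ?thesis .
  qed
  have Dk: "Dsc \<mu> Q x (D *v sc \<mu> Q x) $ k = c / n - G / n^2 + A $ k * H / n^3"
  proof -
    have "Dsc \<mu> Q x (D *v sc \<mu> Q x) $ k = - (?e k \<bullet> (Q *v ((- 1 / n) *\<^sub>R (D *v A))))
        + J2 \<mu> Q (?e k) ((- 1 / n) *\<^sub>R (D *v A)) x / n
        - J1 \<mu> Q (?e k) x * J1 \<mu> Q ((- 1 / n) *\<^sub>R (D *v A)) x / n^2"
      unfolding Dsc_def v_eq n_def by simp
    also have "\<dots> = c / n - G / n^2 + A $ k * H / n^3"
      unfolding J2_scale J1A G_def[symmetric] H_def[symmetric] matrix_vector_mult_scaleR inner_scaleR_right
        inner_scaleR_left cQ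
      using n0 by (simp add: Ai axis_inner field_simps power2_eq_square power3_eq_cube)
    finally show ?thesis .
  qed
  have L1: "J1 \<mu> Q (D *v (Q *v ?e k)) x = c" unfolding c_def J1A ..
  show "(\<chi> k. ((- (- J1 \<mu> Q (D *v (Q *v axis k 1)) x + (\<Sum>i\<in>UNIV. J3 \<mu> Q (axis k 1) (axis i 1) (D *v axis i 1) x) / 2))
             * J0 \<mu> Q x - (- J1 \<mu> Q (axis k 1) x) * ((\<Sum>i\<in>UNIV. J2 \<mu> Q (axis i 1) (D *v axis i 1) x) / 2))
             / (J0 \<mu> Q x * J0 \<mu> Q x)) $ k
    = ((1/2) *\<^sub>R (\<Sum>i\<in>UNIV. DDsc \<mu> Q x (D *v axis i 1) (axis i 1)) + Dsc \<mu> Q x (D *v sc \<mu> Q x)) $ k"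
    unfolding vec_lambda_beta vector_add_component vector_scaleR_component sum_component DDk Dk
      L1 T_def[symmetric] P_def[symmetric] n_def[symmetric] Ai
    using n0 by (simp add: field_simps power2_eq_square power3_eq_cube)
qed

end

theorem theorem1:
  fixes p0 :: "(real^'d) measure"
    and M :: "real \<Rightarrow> real^'c \<Rightarrow> real^'d^'d"
    and t T :: real
    and s :: "real^'d \<Rightarrow> real \<Rightarrow> 'p \<Rightarrow> real^'d"
    and \<phi>star :: "real^'c \<Rightarrow> 'p"
  assumes p0: "prob_space p0" "sets p0 = sets borel"
    and t_pos: "t > 0"
    and M_pd: "\<And>\<theta>. sym_pd (M t \<theta>)"
    and M_diff: "\<And>\<theta>. M t differentiable (at \<theta>)"
  shows
    "(\<forall>\<theta> j x.
        pderiv_param (\<lambda>\<theta>'. score (smoothed_density p0 (M t \<theta>')) x) \<theta> j =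
          (1/2) *\<^sub>R (\<Sum>i\<in>UNIV. dderiv2 (\<lambda>r \<sigma>.
               score (smoothed_density p0 (M t \<theta>))
                 (x + r *\<^sub>R axis i 1 + \<sigma> *\<^sub>R (pderiv_param (M t) \<theta> j *v axis i 1))))
          + vector_derivative (\<lambda>\<sigma>.
               score (smoothed_density p0 (M t \<theta>))
                 (x + \<sigma> *\<^sub>R (pderiv_param (M t) \<theta> j
                        *v score (smoothed_density p0 (M t \<theta>)) x))) (at 0))
     \<and>
     ((T > 0
       \<and> (\<forall>\<theta>. M 0 \<theta> = 0)
       \<and> (\<forall>\<theta>. \<forall>\<tau>\<in>{0<..T}. sym_pd (M \<tau> \<theta>))
       \<and> (\<forall>\<theta>. \<forall>\<tau>\<in>{0..T}. (\<lambda>u. M u \<theta>) differentiable (at \<tau> within {0..T})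
                          \<and> sym_pd (time_deriv M T \<tau> \<theta>))
       \<and> (\<forall>\<theta> \<phi>. score_loss p0 M T s \<theta> (\<phi>star \<theta>) \<le> score_loss p0 M T s \<theta> \<phi>)
       \<and> (\<forall>\<theta> x. s x t (\<phi>star \<theta>) = score (smoothed_density p0 (M t \<theta>)) x))
      \<longrightarrow>
      (\<forall>\<theta> j x.
        pderiv_param (\<lambda>\<theta>'. s x t (\<phi>star \<theta>')) \<theta> j =
          (1/2) *\<^sub>R (\<Sum>i\<in>UNIV. dderiv2 (\<lambda>r \<sigma>.
               s (x + r *\<^sub>R axis i 1 + \<sigma> *\<^sub>R (pderiv_param (M t) \<theta> j *v axis i 1)) t (\<phi>star \<theta>)))
          + vector_derivative (\<lambda>\<sigma>.
               s (x + \<sigma> *\<^sub>R (pderiv_param (M t) \<theta> j *v s x t (\<phi>star \<theta>))) t (\<phi>star \<theta>))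
              (at 0)))"
proof -
  have part1: "\<forall>\<theta> j x.
        pderiv_param (\<lambda>\<theta>'. score (smoothed_density p0 (M t \<theta>')) x) \<theta> j =
          (1/2) *\<^sub>R (\<Sum>i\<in>UNIV. dderiv2 (\<lambda>r \<sigma>.
               score (smoothed_density p0 (M t \<theta>))
                 (x + r *\<^sub>R axis i 1 + \<sigma> *\<^sub>R (pderiv_param (M t) \<theta> j *v axis i 1))))
          + vector_derivative (\<lambda>\<sigma>.
               score (smoothed_density p0 (M t \<theta>))
                 (x + \<sigma> *\<^sub>R (pderiv_param (M t) \<theta> j
                        *v score (smoothed_density p0 (M t \<theta>)) x))) (at 0)"
  proof (intro allI)
    fix \<theta> :: "real^'c" and j :: 'c and x :: "real^'d"
    define m where "m h = M t (\<theta> + h *\<^sub>R axis j 1)" for h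
    define D where "D = pderiv_param (M t) \<theta> j"
    have m0: "m 0 = M t \<theta>" unfolding m_def by simp
    have "((\<lambda>h::real. \<theta> + h *\<^sub>R axis j 1) has_derivative (\<lambda>h. h *\<^sub>R axis j 1)) (at 0)"
      by (auto intro!: derivative_eq_intros)
    then have d1: "(\<lambda>h::real. \<theta> + h *\<^sub>R axis j 1) differentiable (at 0)" by (rule differentiableI)
    have d2: "M t differentiable (at ((\<lambda>h::real. \<theta> + h *\<^sub>R axis j 1) 0))" using M_diff by simp
    have "(M t \<circ> (\<lambda>h::real. \<theta> + h *\<^sub>R axis j 1)) differentiable (at 0)"
      by (rule differentiable_chain_at[OF d1 d2])
    then have "m differentiable (at 0)" unfolding m_def o_def .
    then have md: "(m has_vector_derivative D) (at 0)"
      unfolding D_def pderiv_param_def m_def[symmetric] by (simp add: vector_derivative_works)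
    have mpd: "sym_pd (m h)" for h unfolding m_def by (rule M_pd)
    interpret qcurve m D by unfold_locales (rule md, rule mpd)
    obtain l where l: "l > 0" "\<forall>z. l * norm z ^ 2 \<le> z \<bullet> (matrix_inv (m 0) *v z)"
      using inv_pd_bound[OF mpd[of 0]] by blast
    have pdQ: "pdb (matrix_inv (m 0)) l" unfolding pdb_def using l by blast
    interpret gsetup p0 "matrix_inv (m 0)" l by (rule gsetup.intro[OF p0 pdQ Qsym])
    have sc_m: "score (smoothed_density p0 (M t (\<theta> + h *\<^sub>R axis j 1))) = sc p0 (matrix_inv (m h))" for h
      unfolding m_def by (rule score_repr[OF p0 M_pd])
    have sc_0: "score (smoothed_density p0 (M t \<theta>)) = sc p0 (matrix_inv (m 0))"
      unfolding m0 by (rule score_repr[OF p0 M_pd])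
    let ?Q = "matrix_inv (m 0)"
    define LV where "LV = (\<chi> k. ((- (- J1 p0 ?Q (D *v (?Q *v axis k 1)) x + (\<Sum>i\<in>UNIV. J3 p0 ?Q (axis k 1) (axis i 1) (D *v axis i 1) x) / 2))
             * J0 p0 ?Q x - (- J1 p0 ?Q (axis k 1) x) * ((\<Sum>i\<in>UNIV. J2 p0 ?Q (axis i 1) (D *v axis i 1) x) / 2))
             / (J0 p0 ?Q x * J0 p0 ?Q x))"
    have Lder: "((\<lambda>h. sc p0 (matrix_inv (m h)) x) has_vector_derivative LV) (at 0)"
    proof (rule vec_vderiv)
      fix k
      have n0: "J0 p0 ?Q x \<noteq> 0" using J0_pos[of x] by simp
      have "((\<lambda>h. - J1 p0 (matrix_inv (m h)) (axis k 1) x / J0 p0 (matrix_inv (m h)) x) has_real_derivative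
         ((- (\<integral>y. - ((?Q *v axis k 1) \<bullet> (D *v (?Q *v (x - y)))) * EE ?Q (x - y)
             + (axis k 1 \<bullet> (?Q *v (x - y))) * (((?Q *v (x - y)) \<bullet> (D *v (?Q *v (x - y)))) / 2
             * EE ?Q (x - y)) \<partial>p0)) * J0 p0 ?Q x
          - (- J1 p0 ?Q (axis k 1) x) * (\<integral>y. ((?Q *v (x - y)) \<bullet> (D *v (?Q *v (x - y)))) / 2
             * EE ?Q (x - y) \<partial>p0)) / (J0 p0 ?Q x * J0 p0 ?Q x)) (at 0)"
        by (rule DERIV_divide[OF DERIV_minus[OF DJ1c[OF p0]] DJ0c[OF p0]]) (rule n0)
      then show "((\<lambda>h. sc p0 (matrix_inv (m h)) x $ k) has_real_derivative LV $ k) (at 0)"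
        unfolding curve_int0 curve_int1[OF Dsym] LV_def sc_def vec_lambda_beta .
    qed
    have LHS: "pderiv_param (\<lambda>\<theta>'. score (smoothed_density p0 (M t \<theta>')) x) \<theta> j = LV"
      unfolding pderiv_param_def sc_m by (rule vector_derivative_at[OF Lder])
    have RHS1: "dderiv2 (\<lambda>r \<sigma>. score (smoothed_density p0 (M t \<theta>))
                 (x + r *\<^sub>R axis i 1 + \<sigma> *\<^sub>R (pderiv_param (M t) \<theta> j *v axis i 1)))
        = DDsc p0 ?Q x (D *v axis i 1) (axis i 1)" for i
      unfolding sc_0 D_def[symmetric] by (rule dderiv2_sc)
    have RHS2: "vector_derivative (\<lambda>\<sigma>. score (smoothed_density p0 (M t \<theta>))
                 (x + \<sigma> *\<^sub>R (pderiv_param (M t) \<theta> j *v score (smoothed_density p0 (M t \<theta>)) x))) (at 0)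
        = Dsc p0 ?Q x (D *v sc p0 ?Q x)"
      unfolding sc_0 D_def[symmetric] by (rule sc_vd)
    show "pderiv_param (\<lambda>\<theta>'. score (smoothed_density p0 (M t \<theta>')) x) \<theta> j =
          (1/2) *\<^sub>R (\<Sum>i\<in>UNIV. dderiv2 (\<lambda>r \<sigma>.
               score (smoothed_density p0 (M t \<theta>))
                 (x + r *\<^sub>R axis i 1 + \<sigma> *\<^sub>R (pderiv_param (M t) \<theta> j *v axis i 1))))
          + vector_derivative (\<lambda>\<sigma>.
               score (smoothed_density p0 (M t \<theta>))
                 (x + \<sigma> *\<^sub>R (pderiv_param (M t) \<theta> j
                        *v score (smoothed_density p0 (M t \<theta>)) x))) (at 0)"
      unfolding LHS RHS1 RHS2 LV_def by (rule final_identity[OF Dsym])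
  qed
  show ?thesis
  proof (intro conjI impI)
    show "\<forall>\<theta> j x.
        pderiv_param (\<lambda>\<theta>'. score (smoothed_density p0 (M t \<theta>')) x) \<theta> j =
          (1/2) *\<^sub>R (\<Sum>i\<in>UNIV. dderiv2 (\<lambda>r \<sigma>.
               score (smoothed_density p0 (M t \<theta>))
                 (x + r *\<^sub>R axis i 1 + \<sigma> *\<^sub>R (pderiv_param (M t) \<theta> j *v axis i 1))))
          + vector_derivative (\<lambda>\<sigma>.
               score (smoothed_density p0 (M t \<theta>))
                 (x + \<sigma> *\<^sub>R (pderiv_param (M t) \<theta> j
                        *v score (smoothed_density p0 (M t \<theta>)) x))) (at 0)"
      by (rule part1)
  next
    assume H: "T > 0
       \<and> (\<forall>\<theta>. M 0 \<theta> = 0)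
       \<and> (\<forall>\<theta>. \<forall>\<tau>\<in>{0<..T}. sym_pd (M \<tau> \<theta>))
       \<and> (\<forall>\<theta>. \<forall>\<tau>\<in>{0..T}. (\<lambda>u. M u \<theta>) differentiable (at \<tau> within {0..T})
                          \<and> sym_pd (time_deriv M T \<tau> \<theta>))
       \<and> (\<forall>\<theta> \<phi>. score_loss p0 M T s \<theta> (\<phi>star \<theta>) \<le> score_loss p0 M T s \<theta> \<phi>)
       \<and> (\<forall>\<theta> x. s x t (\<phi>star \<theta>) = score (smoothed_density p0 (M t \<theta>)) x)"
    then have hs: "\<And>\<theta> x. s x t (\<phi>star \<theta>) = score (smoothed_density p0 (M t \<theta>)) x" by blast
    show "\<forall>\<theta> j x.
        pderiv_param (\<lambda>\<theta>'. s x t (\<phi>star \<theta>')) \<theta> j =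
          (1/2) *\<^sub>R (\<Sum>i\<in>UNIV. dderiv2 (\<lambda>r \<sigma>.
               s (x + r *\<^sub>R axis i 1 + \<sigma> *\<^sub>R (pderiv_param (M t) \<theta> j *v axis i 1)) t (\<phi>star \<theta>)))
          + vector_derivative (\<lambda>\<sigma>.
               s (x + \<sigma> *\<^sub>R (pderiv_param (M t) \<theta> j *v s x t (\<phi>star \<theta>))) t (\<phi>star \<theta>))
              (at 0)"
      unfolding hs by (rule part1)
  qed
qed

end
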